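(* Let $X$ be a noncommutative space embedded in $\mathcal A^m$, $e=\tilde E^j\ast E_j$, with canonical connections $\nabla_i\zeta=\partial_i\zeta-\zeta\ast\partial_ie$ on $TX=\mathcal A^m\ast e$ and $\tilde\nabla_i\xi=\partial_i\xi-\partial_i(e)\ast\xi$ on $\tilde TX=e\ast{}^m\!\mathcal A$, and curvature $\mathcal R_{ij}=-(\partial_ie\ast\partial_je-\partial_je\ast\partial_ie)$. Define $R^l_{kij}=E_k\ast\mathcal R_{ij}\ast\tilde E^l$ and $\tilde R^l_{kij}=-g^{lq}\ast E_q\ast\mathcal R_{ij}\ast\tilde E^p\ast g_{pk}$. Then $$R^l_{kij}=-\partial_j\Gamma^l_{ik}-\Gamma^p_{ik}\ast\Gamma^l_{jp}+\partial_i\Gamma^l_{jk}+\Gamma^p_{jk}\ast\Gamma^l_{ip},$$ $$\tilde R^l_{kij}=-\partial_j\tilde\Gamma^l_{ik}-\tilde\Gamma^l_{jp}\ast\tilde\Gamma^p_{ik}+\partial_i\tilde\Gamma^l_{jk}+\tilde\Gamma^l_{ip}\ast\tilde\Gamma^p_{jk},$$ and $[\nabla_i,\nabla_j]E_k=R^l_{kij}\ast E_l$, $[\tilde\nabla_i,\tilde\nabla_j](E_k)^t=(E_l)^t\ast\tilde R^l_{kij}$.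
   Context: $\mathcal A$ denotes the Moyal algebra: for $U\subset\mathbb R^n$ open with coordinates $t$ and $\hbar$ a formal real indeterminate, $\mathcal A$ is the set of formal power series $\sum_{i\ge0}f_i\hbar^i$ with real smooth coefficients on $U$, with product $(f\ast g)(t)=\lim_{t'\to t}\exp\big(\hbar\sum_{i,j}\theta_{ij}\frac{\partial}{\partial t^i}\frac{\partial}{\partial t'^j}\big)f(t)g(t')$ for a fixed constant real skew-symmetric $\theta$ ($\partial_i=\partial/\partial t^i$ are commuting derivations, acting entrywise on matrices). Matrices over $\mathcal A$ are multiplied using $\ast$; $\mathcal A^m$ row vectors, ${}^m\!\mathcal A$ column vectors. Einstein summation. For $X=(X^1,\dots,X^m)\in\mathcal A^m$, $g_{ij}=\sum_\alpha\partial_iX^\alpha\ast\partial_jX^\alpha$; $X$ is a noncommutative space embedded in $\mathcal A^m$ if $(g_{ij})$ is invertible, inverse $(g^{ij})$. $E_i=\partial_iX$, $(E_i)^t$ its transpose, $\tilde E^i=(E_j)^t\ast g^{ji}$. ${}_c\Gamma_{ijl}=\tfrac12(\partial_ig_{jl}+\partial_jg_{li}-\partial_lg_{ji})$, $\Upsilon_{ijl}=\tfrac12(\partial_i(E_j)\ast(E_l)^t-E_l\ast\partial_i(E_j)^t)$, $\Gamma_{ijl}={}_c\Gamma_{ijl}+\Upsilon_{ijl}$, $\tilde\Gamma_{ijl}={}_c\Gamma_{ijl}-\Upsilon_{ijl}$, $\Gamma_{ij}^k=\Gamma_{ijl}\ast g^{lk}$, $\tilde\Gamma_{ij}^k=g^{kl}\ast\tilde\Gamma_{ijl}$.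 *)

theory Defs
  imports "HOL-Analysis.Analysis"
begin

text \<open>An element of the Moyal algebra is a formal power series sum_k f_k hbar^k,
represented by its coefficient sequence k -> f_k, each f_k a real function on real^'n,
only its restriction to U being relevant (smoothness and equalities are required on U).\<close>

type_synonym 'n moyal = "nat \<Rightarrow> (real^'n \<Rightarrow> real)"

definition pd :: "'n::finite \<Rightarrow> (real^'n \<Rightarrow> real) \<Rightarrow> real^'n \<Rightarrow> real" where
  "pd i f x = deriv (\<lambda>t. f (x + t *\<^sub>R axis i 1)) 0"

fun pds :: "'n::finite list \<Rightarrow> (real^'n \<Rightarrow> real) \<Rightarrow> real^'n \<Rightarrow> real" where
  "pds [] f = f"
| "pds (i # ks) f = pd i (pds ks f)"

definition smooth_on :: "(real^'n::finite) set \<Rightarrow> (real^'n \<Rightarrow> real) \<Rightarrow> bool" where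
  "smooth_on U f \<longleftrightarrow>
     (\<forall>ks. continuous_on U (pds ks f) \<and>
        (\<forall>i. \<forall>x\<in>U. (\<lambda>t. pds ks f (x + t *\<^sub>R axis i 1)) differentiable (at 0)))"

definition moyal_elem :: "(real^'n::finite) set \<Rightarrow> 'n moyal \<Rightarrow> bool" where
  "moyal_elem U a \<longleftrightarrow> (\<forall>k. smooth_on U (a k))"

definition meq :: "(real^'n::finite) set \<Rightarrow> 'n moyal \<Rightarrow> 'n moyal \<Rightarrow> bool" where
  "meq U a b \<longleftrightarrow> (\<forall>k. \<forall>x\<in>U. a k x = b k x)"

definition mzero :: "'n moyal" where "mzero = (\<lambda>k x. 0)"
definition mone :: "'n moyal" where "mone = (\<lambda>k x. if k = 0 then 1 else 0)"
definition madd :: "'n moyal \<Rightarrow> 'n moyal \<Rightarrow> 'n moyal" where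
  "madd a b = (\<lambda>k x. a k x + b k x)"
definition mneg :: "'n moyal \<Rightarrow> 'n moyal" where
  "mneg a = (\<lambda>k x. - a k x)"
definition mdiff :: "'n moyal \<Rightarrow> 'n moyal \<Rightarrow> 'n moyal" where
  "mdiff a b = madd a (mneg b)"
definition mscale :: "real \<Rightarrow> 'n moyal \<Rightarrow> 'n moyal" where
  "mscale c a = (\<lambda>k x. c * a k x)"
definition msum :: "'i set \<Rightarrow> ('i \<Rightarrow> 'n moyal) \<Rightarrow> 'n moyal" where
  "msum I f = (\<lambda>k x. \<Sum>j\<in>I. f j k x)"

definition mpd :: "'n::finite \<Rightarrow> 'n moyal \<Rightarrow> 'n moyal" where
  "mpd i a = (\<lambda>k. pd i (a k))"

text \<open>Moyal product: expansion of
  lim_{t'->t} exp(hbar sum theta_ij d/dt^i d/dt'^j) f(t) g(t'):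
  the hbar^k coefficient is sum over p+q+N=k of
  1/N! sum_{i_1..i_N, j_1..j_N} prod theta_{i_r j_r} (d_{i_1..i_N} f_p)(d_{j_1..j_N} g_q).\<close>
definition mstar :: "real^'n^'n \<Rightarrow> 'n::finite moyal \<Rightarrow> 'n moyal \<Rightarrow> 'n moyal" where
  "mstar \<theta> a b = (\<lambda>k x. \<Sum>p\<le>k. \<Sum>q\<le>k - p.
      (1 / fact (k - p - q)) *
      (\<Sum>ks\<in>{ks. length ks = k - p - q}. \<Sum>js\<in>{js. length js = k - p - q}.
          (\<Prod>r<k - p - q. \<theta> $ (ks ! r) $ (js ! r)) * pds ks (a p) x * pds js (b q) x))"

definition rowcol :: "real^'n^'n \<Rightarrow> ('m::finite \<Rightarrow> 'n::finite moyal) \<Rightarrow> ('m \<Rightarrow> 'n moyal) \<Rightarrow> 'n moyal" where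
  "rowcol \<theta> v w = msum UNIV (\<lambda>\<alpha>. mstar \<theta> (v \<alpha>) (w \<alpha>))"
definition rowmat :: "real^'n^'n \<Rightarrow> ('m::finite \<Rightarrow> 'n::finite moyal) \<Rightarrow> ('m \<Rightarrow> 'p \<Rightarrow> 'n moyal) \<Rightarrow> 'p \<Rightarrow> 'n moyal" where
  "rowmat \<theta> v M = (\<lambda>\<beta>. msum UNIV (\<lambda>\<alpha>. mstar \<theta> (v \<alpha>) (M \<alpha> \<beta>)))"
definition matcol :: "real^'n^'n \<Rightarrow> ('p \<Rightarrow> 'm::finite \<Rightarrow> 'n::finite moyal) \<Rightarrow> ('m \<Rightarrow> 'n moyal) \<Rightarrow> 'p \<Rightarrow> 'n moyal" where
  "matcol \<theta> M w = (\<lambda>\<alpha>. msum UNIV (\<lambda>\<beta>. mstar \<theta> (M \<alpha> \<beta>) (w \<beta>)))"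
definition matmat :: "real^'n^'n \<Rightarrow> ('p \<Rightarrow> 'm::finite \<Rightarrow> 'n::finite moyal) \<Rightarrow> ('m \<Rightarrow> 'q \<Rightarrow> 'n moyal) \<Rightarrow> 'p \<Rightarrow> 'q \<Rightarrow> 'n moyal" where
  "matmat \<theta> A B = (\<lambda>\<alpha> \<gamma>. msum UNIV (\<lambda>\<beta>. mstar \<theta> (A \<alpha> \<beta>) (B \<beta> \<gamma>)))"

text \<open>E_i = partial_i X (a row vector in A^m); its transpose (E_i)^t is the column with the same entries.\<close>
definition Evec :: "('m::finite \<Rightarrow> 'n::finite moyal) \<Rightarrow> 'n \<Rightarrow> 'm \<Rightarrow> 'n moyal" where
  "Evec X i = (\<lambda>\<alpha>. mpd i (X \<alpha>))"

definition metric :: "real^'n^'n \<Rightarrow> ('m::finite \<Rightarrow> 'n::finite moyal) \<Rightarrow> 'n \<Rightarrow> 'n \<Rightarrow> 'n moyal" where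
  "metric \<theta> X i j = msum UNIV (\<lambda>\<alpha>. mstar \<theta> (mpd i (X \<alpha>)) (mpd j (X \<alpha>)))"

definition is_metric_inverse ::
  "(real^'n) set \<Rightarrow> real^'n^'n \<Rightarrow> ('m::finite \<Rightarrow> 'n::finite moyal) \<Rightarrow> ('n \<Rightarrow> 'n \<Rightarrow> 'n moyal) \<Rightarrow> bool" where
  "is_metric_inverse U \<theta> X G \<longleftrightarrow>
     (\<forall>i j. moyal_elem U (G i j)) \<and>
     (\<forall>i j. meq U (matmat \<theta> (metric \<theta> X) G i j) (if i = j then mone else mzero)) \<and>
     (\<forall>i j. meq U (matmat \<theta> G (metric \<theta> X) i j) (if i = j then mone else mzero))"

definition nc_space ::
  "(real^'n) set \<Rightarrow> real^'n^'n \<Rightarrow> ('m::finite \<Rightarrow> 'n::finite moyal) \<Rightarrow> ('n \<Rightarrow> 'n \<Rightarrow> 'n moyal) \<Rightarrow> bool" where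
  "nc_space U \<theta> X G \<longleftrightarrow> (\<forall>\<alpha>. moyal_elem U (X \<alpha>)) \<and> is_metric_inverse U \<theta> X G"

definition Etil :: "real^'n^'n \<Rightarrow> ('m::finite \<Rightarrow> 'n::finite moyal) \<Rightarrow> ('n \<Rightarrow> 'n \<Rightarrow> 'n moyal) \<Rightarrow> 'n \<Rightarrow> 'm \<Rightarrow> 'n moyal" where
  "Etil \<theta> X G i = (\<lambda>\<alpha>. msum UNIV (\<lambda>j. mstar \<theta> (Evec X j \<alpha>) (G j i)))"

definition proj :: "real^'n^'n \<Rightarrow> ('m::finite \<Rightarrow> 'n::finite moyal) \<Rightarrow> ('n \<Rightarrow> 'n \<Rightarrow> 'n moyal) \<Rightarrow> 'm \<Rightarrow> 'm \<Rightarrow> 'n moyal" where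
  "proj \<theta> X G = (\<lambda>\<alpha> \<beta>. msum UNIV (\<lambda>j. mstar \<theta> (Etil \<theta> X G j \<alpha>) (Evec X j \<beta>)))"

definition dproj :: "real^'n^'n \<Rightarrow> ('m::finite \<Rightarrow> 'n::finite moyal) \<Rightarrow> ('n \<Rightarrow> 'n \<Rightarrow> 'n moyal) \<Rightarrow> 'n \<Rightarrow> 'm \<Rightarrow> 'm \<Rightarrow> 'n moyal" where
  "dproj \<theta> X G i = (\<lambda>\<alpha> \<beta>. mpd i (proj \<theta> X G \<alpha> \<beta>))"

definition nabla :: "real^'n^'n \<Rightarrow> ('m::finite \<Rightarrow> 'n::finite moyal) \<Rightarrow> ('n \<Rightarrow> 'n \<Rightarrow> 'n moyal) \<Rightarrow> 'n \<Rightarrow> ('m \<Rightarrow> 'n moyal) \<Rightarrow> 'm \<Rightarrow> 'n moyal" where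
  "nabla \<theta> X G i \<zeta> = (\<lambda>\<beta>. mdiff (mpd i (\<zeta> \<beta>)) (rowmat \<theta> \<zeta> (dproj \<theta> X G i) \<beta>))"

definition nablatil :: "real^'n^'n \<Rightarrow> ('m::finite \<Rightarrow> 'n::finite moyal) \<Rightarrow> ('n \<Rightarrow> 'n \<Rightarrow> 'n moyal) \<Rightarrow> 'n \<Rightarrow> ('m \<Rightarrow> 'n moyal) \<Rightarrow> 'm \<Rightarrow> 'n moyal" where
  "nablatil \<theta> X G i \<xi> = (\<lambda>\<alpha>. mdiff (mpd i (\<xi> \<alpha>)) (matcol \<theta> (dproj \<theta> X G i) \<xi> \<alpha>))"

definition curv :: "real^'n^'n \<Rightarrow> ('m::finite \<Rightarrow> 'n::finite moyal) \<Rightarrow> ('n \<Rightarrow> 'n \<Rightarrow> 'n moyal) \<Rightarrow> 'n \<Rightarrow> 'n \<Rightarrow> 'm \<Rightarrow> 'm \<Rightarrow> 'n moyal" where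
  "curv \<theta> X G i j = (\<lambda>\<alpha> \<beta>. mneg (mdiff (matmat \<theta> (dproj \<theta> X G i) (dproj \<theta> X G j) \<alpha> \<beta>)
                                          (matmat \<theta> (dproj \<theta> X G j) (dproj \<theta> X G i) \<alpha> \<beta>)))"

definition Riem :: "real^'n^'n \<Rightarrow> ('m::finite \<Rightarrow> 'n::finite moyal) \<Rightarrow> ('n \<Rightarrow> 'n \<Rightarrow> 'n moyal) \<Rightarrow> 'n \<Rightarrow> 'n \<Rightarrow> 'n \<Rightarrow> 'n \<Rightarrow> 'n moyal" where
  "Riem \<theta> X G l k i j = rowcol \<theta> (rowmat \<theta> (Evec X k) (curv \<theta> X G i j)) (Etil \<theta> X G l)"

definition Riemtil :: "real^'n^'n \<Rightarrow> ('m::finite \<Rightarrow> 'n::finite moyal) \<Rightarrow> ('n \<Rightarrow> 'n \<Rightarrow> 'n moyal) \<Rightarrow> 'n \<Rightarrow> 'n \<Rightarrow> 'n \<Rightarrow> 'n \<Rightarrow> 'n moyal" where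
  "Riemtil \<theta> X G l k i j = mneg (msum UNIV (\<lambda>q. msum UNIV (\<lambda>p.
       mstar \<theta> (mstar \<theta> (G l q) (rowcol \<theta> (rowmat \<theta> (Evec X q) (curv \<theta> X G i j)) (Etil \<theta> X G p)))
               (metric \<theta> X p k))))"

definition cGamma :: "real^'n^'n \<Rightarrow> ('m::finite \<Rightarrow> 'n::finite moyal) \<Rightarrow> 'n \<Rightarrow> 'n \<Rightarrow> 'n \<Rightarrow> 'n moyal" where
  "cGamma \<theta> X i j l = mscale (1/2)
     (mdiff (madd (mpd i (metric \<theta> X j l)) (mpd j (metric \<theta> X l i))) (mpd l (metric \<theta> X j i)))"

definition Upsilon :: "real^'n^'n \<Rightarrow> ('m::finite \<Rightarrow> 'n::finite moyal) \<Rightarrow> 'n \<Rightarrow> 'n \<Rightarrow> 'n \<Rightarrow> 'n moyal" where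
  "Upsilon \<theta> X i j l = mscale (1/2)
     (mdiff (rowcol \<theta> (\<lambda>\<alpha>. mpd i (Evec X j \<alpha>)) (Evec X l))
            (rowcol \<theta> (Evec X l) (\<lambda>\<alpha>. mpd i (Evec X j \<alpha>))))"

definition Gamma3 :: "real^'n^'n \<Rightarrow> ('m::finite \<Rightarrow> 'n::finite moyal) \<Rightarrow> 'n \<Rightarrow> 'n \<Rightarrow> 'n \<Rightarrow> 'n moyal" where
  "Gamma3 \<theta> X i j l = madd (cGamma \<theta> X i j l) (Upsilon \<theta> X i j l)"
definition Gamma3til :: "real^'n^'n \<Rightarrow> ('m::finite \<Rightarrow> 'n::finite moyal) \<Rightarrow> 'n \<Rightarrow> 'n \<Rightarrow> 'n \<Rightarrow> 'n moyal" where
  "Gamma3til \<theta> X i j l = mdiff (cGamma \<theta> X i j l) (Upsilon \<theta> X i j l)"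

definition Gam :: "real^'n^'n \<Rightarrow> ('m::finite \<Rightarrow> 'n::finite moyal) \<Rightarrow> ('n \<Rightarrow> 'n \<Rightarrow> 'n moyal) \<Rightarrow> 'n \<Rightarrow> 'n \<Rightarrow> 'n \<Rightarrow> 'n moyal" where
  "Gam \<theta> X G k i j = msum UNIV (\<lambda>l. mstar \<theta> (Gamma3 \<theta> X i j l) (G l k))"
definition Gamtil :: "real^'n^'n \<Rightarrow> ('m::finite \<Rightarrow> 'n::finite moyal) \<Rightarrow> ('n \<Rightarrow> 'n \<Rightarrow> 'n moyal) \<Rightarrow> 'n \<Rightarrow> 'n \<Rightarrow> 'n \<Rightarrow> 'n moyal" where
  "Gamtil \<theta> X G k i j = msum UNIV (\<lambda>l. mstar \<theta> (G k l) (Gamma3til \<theta> X i j l))"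

end

theory Submission
  imports Defs "HOL-Library.Function_Algebras"
begin


locale dalg =
  fixes sm :: "'a::ab_group_add \<Rightarrow> bool"
    and mul :: "'a \<Rightarrow> 'a \<Rightarrow> 'a"
    and one :: 'a
    and D :: "'i \<Rightarrow> 'a \<Rightarrow> 'a"
    and half :: "'a \<Rightarrow> 'a"
  assumes sm_add: "sm a \<Longrightarrow> sm b \<Longrightarrow> sm (a + b)"
    and sm_uminus: "sm a \<Longrightarrow> sm (- a)"
    and sm_zero: "sm 0"
    and sm_mul: "sm a \<Longrightarrow> sm b \<Longrightarrow> sm (mul a b)"
    and sm_one: "sm one"
    and sm_D: "sm a \<Longrightarrow> sm (D i a)"
    and sm_half: "sm a \<Longrightarrow> sm (half a)"
    and mul_addL: "sm a \<Longrightarrow> sm b \<Longrightarrow> sm c \<Longrightarrow> mul (a + b) c = mul a c + mul b c"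
    and mul_addR: "sm a \<Longrightarrow> sm b \<Longrightarrow> sm c \<Longrightarrow> mul a (b + c) = mul a b + mul a c"
    and mul_assoc: "sm a \<Longrightarrow> sm b \<Longrightarrow> sm c \<Longrightarrow> mul (mul a b) c = mul a (mul b c)"
    and mul_oneL: "sm a \<Longrightarrow> mul one a = a"
    and mul_oneR: "sm a \<Longrightarrow> mul a one = a"
    and D_add: "sm a \<Longrightarrow> sm b \<Longrightarrow> D i (a + b) = D i a + D i b"
    and D_mul: "sm a \<Longrightarrow> sm b \<Longrightarrow> D i (mul a b) = mul (D i a) b + mul a (D i b)"
    and D_comm: "sm a \<Longrightarrow> D i (D j a) = D j (D i a)"
    and half_add: "sm a \<Longrightarrow> sm b \<Longrightarrow> half (a + b) = half a + half b"
    and half_twice: "sm a \<Longrightarrow> half a + half a = a"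
begin

lemma sm_diff: "sm a \<Longrightarrow> sm b \<Longrightarrow> sm (a - b)"
  using sm_add sm_uminus by (metis diff_conv_add_uminus)

lemma sm_sum: "finite S \<Longrightarrow> (\<And>y. y \<in> S \<Longrightarrow> sm (f y)) \<Longrightarrow> sm (sum f S)"
  by (induction S rule: finite_induct) (auto intro: sm_add sm_zero)

lemma mul_zeroL: "sm c \<Longrightarrow> mul 0 c = 0"
  using mul_addL[of 0 0 c] sm_zero by simp
lemma mul_zeroR: "sm c \<Longrightarrow> mul c 0 = 0"
  using mul_addR[of c 0 0] sm_zero by simp
lemma mul_uminusL: "sm a \<Longrightarrow> sm c \<Longrightarrow> mul (- a) c = - mul a c"
proof -
  assume h: "sm a" "sm c"
  have "mul a c + mul (- a) c = 0" using mul_addL[of a "-a" c] h sm_uminus mul_zeroL by simp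
  then show ?thesis by (rule minus_unique[symmetric])
qed
lemma mul_uminusR: "sm a \<Longrightarrow> sm c \<Longrightarrow> mul c (- a) = - mul c a"
proof -
  assume h: "sm a" "sm c"
  have "mul c a + mul c (- a) = 0" using mul_addR[of c a "-a"] h sm_uminus mul_zeroR by simp
  then show ?thesis by (rule minus_unique[symmetric])
qed
lemma mul_diffL: "sm a \<Longrightarrow> sm b \<Longrightarrow> sm c \<Longrightarrow> mul (a - b) c = mul a c - mul b c"
  using mul_addL[of a "-b" c] mul_uminusL[of b c] sm_uminus[of b] by (simp only: diff_conv_add_uminus)
lemma mul_diffR: "sm a \<Longrightarrow> sm b \<Longrightarrow> sm c \<Longrightarrow> mul c (a - b) = mul c a - mul c b"
  using mul_addR[of c a "-b"] mul_uminusR[of b c] sm_uminus[of b] by (simp only: diff_conv_add_uminus)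

lemma mul_sumL: "finite S \<Longrightarrow> (\<And>y. y \<in> S \<Longrightarrow> sm (f y)) \<Longrightarrow> sm c \<Longrightarrow>
   mul (sum f S) c = (\<Sum>y\<in>S. mul (f y) c)"
  by (induction S rule: finite_induct) (auto simp: mul_zeroL mul_addL sm_sum)
lemma mul_sumR: "finite S \<Longrightarrow> (\<And>y. y \<in> S \<Longrightarrow> sm (f y)) \<Longrightarrow> sm c \<Longrightarrow>
   mul c (sum f S) = (\<Sum>y\<in>S. mul c (f y))"
  by (induction S rule: finite_induct) (auto simp: mul_zeroR mul_addR sm_sum)

lemma D_zero: "D i 0 = 0"
  using D_add[of 0 0 i] sm_zero by simp
lemma D_uminus: "sm a \<Longrightarrow> D i (- a) = - D i a"
proof -
  assume h: "sm a"
  have "D i a + D i (- a) = 0" using D_add[of a "-a" i] h sm_uminus D_zero by simp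
  then show ?thesis by (rule minus_unique[symmetric])
qed
lemma D_diff: "sm a \<Longrightarrow> sm b \<Longrightarrow> D i (a - b) = D i a - D i b"
  using D_add[of a "-b" i] D_uminus[of b i] sm_uminus[of b] by (simp only: diff_conv_add_uminus)
lemma D_sum: "finite S \<Longrightarrow> (\<And>y. y \<in> S \<Longrightarrow> sm (f y)) \<Longrightarrow> D i (sum f S) = (\<Sum>y\<in>S. D i (f y))"
  by (induction S rule: finite_induct) (auto simp: D_zero D_add sm_sum)
lemma D_one: "D i one = 0"
proof -
  have "D i one = D i (mul one one)" using mul_oneL sm_one by simp
  also have "\<dots> = D i one + D i one" using D_mul[OF sm_one sm_one] sm_D sm_one mul_oneL mul_oneR by simp
  finally show ?thesis by simp
qed

lemma half_zero: "half 0 = 0"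
  using half_add[of 0 0] sm_zero by simp
lemma half_uminus: "sm a \<Longrightarrow> half (- a) = - half a"
proof -
  assume h: "sm a"
  have "half a + half (- a) = 0" using half_add[of a "-a"] h sm_uminus half_zero by simp
  then show ?thesis by (rule minus_unique[symmetric])
qed
lemma half_diff: "sm a \<Longrightarrow> sm b \<Longrightarrow> half (a - b) = half a - half b"
  using half_add[of a "-b"] half_uminus[of b] sm_uminus[of b] by (simp only: diff_conv_add_uminus)

section \<open>Matrices\<close>

definition mm :: "('p \<Rightarrow> 'q::finite \<Rightarrow> 'a) \<Rightarrow> ('q \<Rightarrow> 'r \<Rightarrow> 'a) \<Rightarrow> 'p \<Rightarrow> 'r \<Rightarrow> 'a" where
  "mm A B = (\<lambda>x z. \<Sum>y\<in>UNIV. mul (A x y) (B y z))"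
definition msm :: "('p \<Rightarrow> 'q \<Rightarrow> 'a) \<Rightarrow> bool" where
  "msm A \<longleftrightarrow> (\<forall>x y. sm (A x y))"
definition MD :: "'i \<Rightarrow> ('p \<Rightarrow> 'q \<Rightarrow> 'a) \<Rightarrow> 'p \<Rightarrow> 'q \<Rightarrow> 'a" where
  "MD i A = (\<lambda>x y. D i (A x y))"
definition idm :: "'p \<Rightarrow> 'p \<Rightarrow> 'a" where
  "idm = (\<lambda>x y. if x = y then one else 0)"
definition tr :: "('p \<Rightarrow> 'q \<Rightarrow> 'a) \<Rightarrow> 'q \<Rightarrow> 'p \<Rightarrow> 'a" where
  "tr A = (\<lambda>x y. A y x)"

lemma msm_add[simp]: "msm A \<Longrightarrow> msm B \<Longrightarrow> msm (A + B)"
  by (simp add: msm_def sm_add)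
lemma msm_uminus[simp]: "msm A \<Longrightarrow> msm (- A)"
  by (simp add: msm_def sm_uminus)
lemma msm_diff[simp]: "msm A \<Longrightarrow> msm B \<Longrightarrow> msm (A - B)"
  by (simp add: msm_def sm_diff)
lemma msm_zero[simp]: "msm 0"
  by (simp add: msm_def sm_zero)
lemma msm_mm[simp]: "msm A \<Longrightarrow> msm B \<Longrightarrow> msm (mm A B)"
  by (simp add: msm_def mm_def sm_mul sm_sum)
lemma msm_MD[simp]: "msm A \<Longrightarrow> msm (MD i A)"
  by (simp add: msm_def MD_def sm_D)
lemma msm_idm[simp]: "msm idm"
  by (simp add: msm_def idm_def sm_one sm_zero)
lemma msm_tr[simp]: "msm A \<Longrightarrow> msm (tr A)"
  by (simp add: msm_def tr_def)

lemma mm_addL: "msm A \<Longrightarrow> msm B \<Longrightarrow> msm C \<Longrightarrow> mm (A + B) C = mm A C + mm B C"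
  unfolding mm_def msm_def by (intro ext) (auto simp: mul_addL sum.distrib)
lemma mm_addR: "msm A \<Longrightarrow> msm B \<Longrightarrow> msm C \<Longrightarrow> mm C (A + B) = mm C A + mm C B"
  unfolding mm_def msm_def by (intro ext) (auto simp: mul_addR sum.distrib)
lemma mm_uminusL: "msm A \<Longrightarrow> msm C \<Longrightarrow> mm (- A) C = - mm A C"
  unfolding mm_def msm_def by (intro ext) (auto simp: mul_uminusL sum_negf)
lemma mm_uminusR: "msm A \<Longrightarrow> msm C \<Longrightarrow> mm C (- A) = - mm C A"
  unfolding mm_def msm_def by (intro ext) (auto simp: mul_uminusR sum_negf)
lemma mm_diffL: "msm A \<Longrightarrow> msm B \<Longrightarrow> msm C \<Longrightarrow> mm (A - B) C = mm A C - mm B C"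
  unfolding mm_def msm_def by (intro ext) (auto simp: mul_diffL sum_subtractf)
lemma mm_diffR: "msm A \<Longrightarrow> msm B \<Longrightarrow> msm C \<Longrightarrow> mm C (A - B) = mm C A - mm C B"
  unfolding mm_def msm_def by (intro ext) (auto simp: mul_diffR sum_subtractf)
lemma mm_zeroL: "msm C \<Longrightarrow> mm 0 C = 0"
  unfolding mm_def msm_def by (intro ext) (auto simp: mul_zeroL)
lemma mm_zeroR: "msm C \<Longrightarrow> mm C 0 = 0"
  unfolding mm_def msm_def by (intro ext) (auto simp: mul_zeroR)

lemma mm_assoc: "msm A \<Longrightarrow> msm B \<Longrightarrow> msm C \<Longrightarrow> mm (mm A B) C = mm A (mm B C)"
proof -
  assume a: "msm A" "msm B" "msm C"
  show ?thesis
  proof (intro ext)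
    fix x w
    have "mm (mm A B) C x w = (\<Sum>z\<in>UNIV. \<Sum>y\<in>UNIV. mul (mul (A x y) (B y z)) (C z w))"
      using a unfolding mm_def msm_def by (simp add: mul_sumL sm_mul)
    also have "\<dots> = (\<Sum>y\<in>UNIV. \<Sum>z\<in>UNIV. mul (A x y) (mul (B y z) (C z w)))"
      using a unfolding msm_def by (subst sum.swap) (simp add: mul_assoc)
    also have "\<dots> = mm A (mm B C) x w"
      using a unfolding mm_def msm_def by (simp add: mul_sumR sm_mul)
    finally show "mm (mm A B) C x w = mm A (mm B C) x w" .
  qed
qed

lemma mm_idL: "msm A \<Longrightarrow> mm idm A = A"
proof (intro ext)
  fix x z assume "msm A"
  then have "\<And>y. mul (idm x y) (A y z) = (if x = y then A x z else 0)"
    unfolding msm_def idm_def by (auto simp: mul_oneL mul_zeroL)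
  then show "mm idm A x z = A x z" unfolding mm_def by simp
qed
lemma mm_idR: "msm A \<Longrightarrow> mm A idm = A"
proof (intro ext)
  fix x z assume "msm A"
  then have "\<And>y. mul (A x y) (idm y z) = (if y = z then A x z else 0)"
    unfolding msm_def idm_def by (auto simp: mul_oneR mul_zeroR)
  then show "mm A idm x z = A x z" unfolding mm_def by simp
qed

lemma MD_add: "msm A \<Longrightarrow> msm B \<Longrightarrow> MD i (A + B) = MD i A + MD i B"
  unfolding MD_def msm_def by (intro ext) (auto simp: D_add)
lemma MD_uminus: "msm A \<Longrightarrow> MD i (- A) = - MD i A"
  unfolding MD_def msm_def by (intro ext) (auto simp: D_uminus)
lemma MD_diff: "msm A \<Longrightarrow> msm B \<Longrightarrow> MD i (A - B) = MD i A - MD i B"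
  unfolding MD_def msm_def by (intro ext) (auto simp: D_diff)
lemma MD_zero: "MD i 0 = 0"
  unfolding MD_def by (intro ext) (auto simp: D_zero)
lemma MD_idm: "MD i idm = 0"
  unfolding MD_def idm_def by (intro ext) (auto simp: D_zero D_one)
lemma MD_comm: "msm A \<Longrightarrow> MD i (MD j A) = MD j (MD i A)"
  unfolding MD_def msm_def by (intro ext) (auto simp: D_comm)
lemma MD_tr: "MD i (tr A) = tr (MD i A)"
  unfolding MD_def tr_def by auto
lemma MD_mm: "msm A \<Longrightarrow> msm B \<Longrightarrow> MD i (mm A B) = mm (MD i A) B + mm A (MD i B)"
  unfolding MD_def mm_def msm_def
  by (intro ext) (simp add: D_sum sm_mul D_mul sum.distrib)

end
locale espace = dalg sm mul one D half
  for sm :: "'a::ab_group_add \<Rightarrow> bool" and mul and one and D :: "'i::finite \<Rightarrow> 'a \<Rightarrow> 'a" and half +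
  fixes X :: "'m::finite \<Rightarrow> 'a" and G :: "'i \<Rightarrow> 'i \<Rightarrow> 'a"
  assumes smX: "sm (X \<alpha>)" and smG: "msm G"
    and invL: "mm (mm (\<lambda>k \<alpha>. D k (X \<alpha>)) (tr (\<lambda>k \<alpha>. D k (X \<alpha>)))) G = idm"
    and invR: "mm G (mm (\<lambda>k \<alpha>. D k (X \<alpha>)) (tr (\<lambda>k \<alpha>. D k (X \<alpha>)))) = idm"
begin

definition EE :: "'i \<Rightarrow> 'm \<Rightarrow> 'a" where "EE = (\<lambda>k \<alpha>. D k (X \<alpha>))"
definition gM where "gM = mm EE (tr EE)"
definition ET where "ET = mm (tr EE) G"
definition EH where "EH = mm G EE"
definition eM where "eM = mm ET EE"
definition de where "de i = MD i eM"
definition RR where "RR i j = - (mm (de i) (de j) - mm (de j) (de i))"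
definition RM where "RM i j = mm (mm EE (RR i j)) ET"
definition RTM where "RTM i j = - mm (mm G (RM i j)) gM"
definition Gm where "Gm i = mm (MD i EE) ET"
definition Gt where "Gt i = mm EH (tr (MD i EE))"
definition NB where "NB i A = MD i A - mm A (de i)"
definition NT where "NT i B = MD i B - mm (de i) B"

lemma msm_EE[simp]: "msm EE" by (simp add: EE_def msm_def sm_D smX)
lemma msm_G[simp]: "msm G" by (rule smG)
lemma msm_gM[simp]: "msm gM" by (simp add: gM_def)
lemma msm_ET[simp]: "msm ET" by (simp add: ET_def)
lemma msm_EH[simp]: "msm EH" by (simp add: EH_def)
lemma msm_eM[simp]: "msm eM" by (simp add: eM_def)
lemma msm_de[simp]: "msm (de i)" by (simp add: de_def)
lemma msm_RR[simp]: "msm (RR i j)" by (simp add: RR_def)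
lemma msm_RM[simp]: "msm (RM i j)" by (simp add: RM_def)
lemma msm_Gm[simp]: "msm (Gm i)" by (simp add: Gm_def)
lemma msm_Gt[simp]: "msm (Gt i)" by (simp add: Gt_def)

lemma gG: "mm gM G = idm" using invL by (simp add: gM_def EE_def)
lemma Gg: "mm G gM = idm" using invR by (simp add: gM_def EE_def)

lemma F1: "mm EE ET = idm"
  by (simp add: ET_def mm_assoc[symmetric] gG[unfolded gM_def])
lemma F1b: "mm EH (tr EE) = idm"
  by (simp add: EH_def mm_assoc Gg[unfolded gM_def])
lemma eM_alt: "eM = mm (tr EE) EH"
  by (simp add: eM_def ET_def EH_def mm_assoc)
lemma F2: "mm EE eM = EE"
  by (simp add: eM_def mm_assoc[symmetric] F1 mm_idL)
lemma F3: "mm eM ET = ET"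
  by (simp add: eM_def mm_assoc F1 mm_idR)
lemma F4: "mm eM eM = eM"
  by (simp add: eM_def mm_assoc[symmetric]) (simp add: mm_assoc F1 mm_idR)
lemma F5: "mm EH eM = EH"
  by (simp add: eM_alt mm_assoc[symmetric] F1b mm_idL)
lemma F6: "mm eM (tr EE) = tr EE"
  by (simp add: eM_alt mm_assoc F1b mm_idR)

lemma Dx: "msm A \<Longrightarrow> msm B \<Longrightarrow> mm A B = C \<Longrightarrow> mm (MD i A) B + mm A (MD i B) = MD i C"
  using MD_mm by metis

lemma D2: "mm EE (de i) = MD i EE - mm (MD i EE) eM"
  using Dx[OF msm_EE msm_eM F2, of i] by (simp add: de_def algebra_simps)
lemma D3: "mm (de j) ET = MD j ET - mm eM (MD j ET)"
  using Dx[OF msm_eM msm_ET F3, of j] by (simp add: de_def algebra_simps)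
lemma D4: "de i = mm (de i) eM + mm eM (de i)"
  using Dx[OF msm_eM msm_eM F4, of i] by (simp add: de_def)
lemma D1: "mm EE (MD j ET) = - mm (MD j EE) ET"
  using Dx[OF msm_EE msm_ET F1, of j] by (simp add: MD_idm algebra_simps eq_neg_iff_add_eq_0)
lemma D5: "mm EH (de i) = MD i EH - mm (MD i EH) eM"
  using Dx[OF msm_EH msm_eM F5, of i] by (simp add: de_def algebra_simps)
lemma D6: "mm (de j) (tr EE) = tr (MD j EE) - mm eM (tr (MD j EE))"
  using Dx[OF msm_eM msm_tr[OF msm_EE] F6, of j] by (simp add: de_def MD_tr algebra_simps)
lemma D1b: "mm (MD i EH) (tr EE) = - mm EH (tr (MD i EE))"
  using Dx[OF msm_EH msm_tr[OF msm_EE] F1b, of i] by (simp add: MD_idm MD_tr algebra_simps eq_neg_iff_add_eq_0)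


lemma F4': "msm Z \<Longrightarrow> mm eM (mm eM Z) = mm eM Z"
  by (simp add: mm_assoc[symmetric] F4)
lemma ETg: "mm ET gM = tr EE"
  by (simp add: ET_def mm_assoc Gg mm_idR)

lemma Q1: "mm (mm EE (mm (de i) (de j))) ET =
   MD j (Gm i) - mm (MD j (MD i EE)) ET + mm (Gm i) (Gm j)"
proof -
  have "mm (mm EE (mm (de i) (de j))) ET = mm (mm EE (de i)) (mm (de j) ET)"
    by (simp add: mm_assoc)
  also have "\<dots> = mm (MD i EE - mm (MD i EE) eM) (MD j ET - mm eM (MD j ET))"
    by (simp add: D2 D3)
  also have "\<dots> = mm (MD i EE) (MD j ET) - mm (MD i EE) (mm eM (MD j ET))"
    by (simp add: mm_diffL mm_diffR mm_assoc F4' algebra_simps)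
  also have "mm (MD i EE) (MD j ET) = MD j (Gm i) - mm (MD j (MD i EE)) ET"
    using Dx[OF msm_MD[OF msm_EE] msm_ET Gm_def[symmetric], of j] by (simp add: algebra_simps)
  also have "mm (MD i EE) (mm eM (MD j ET)) = mm (Gm i) (mm EE (MD j ET))"
    by (simp add: Gm_def eM_def mm_assoc)
  also have "\<dots> = - mm (Gm i) (Gm j)"
    by (simp add: D1 mm_uminusR Gm_def)
  finally show ?thesis by (metis diff_minus_eq_add)
qed

theorem T1: "RM i j = - MD j (Gm i) - mm (Gm i) (Gm j) + MD i (Gm j) + mm (Gm j) (Gm i)"
proof -
  have "RM i j = - (mm (mm EE (mm (de i) (de j))) ET - mm (mm EE (mm (de j) (de i))) ET)"
    by (simp add: RM_def RR_def mm_uminusR mm_uminusL mm_diffR mm_diffL)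
  also have "\<dots> = - MD j (Gm i) - mm (Gm i) (Gm j) + MD i (Gm j) + mm (Gm j) (Gm i)"
    by (simp add: Q1 MD_comm[of EE i j] algebra_simps)
  finally show ?thesis .
qed

lemma Q2: "mm (mm EH (mm (de i) (de j))) (tr EE) =
   MD i (Gt j) - mm EH (tr (MD i (MD j EE))) + mm (Gt i) (Gt j)"
proof -
  have "mm (mm EH (mm (de i) (de j))) (tr EE) = mm (mm EH (de i)) (mm (de j) (tr EE))"
    by (simp add: mm_assoc)
  also have "\<dots> = mm (MD i EH - mm (MD i EH) eM) (tr (MD j EE) - mm eM (tr (MD j EE)))"
    by (simp add: D5 D6)
  also have "\<dots> = mm (MD i EH) (tr (MD j EE)) - mm (MD i EH) (mm eM (tr (MD j EE)))"
    by (simp add: mm_diffL mm_diffR mm_assoc F4' algebra_simps)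
  also have "mm (MD i EH) (tr (MD j EE)) = MD i (Gt j) - mm EH (tr (MD i (MD j EE)))"
    using Dx[OF msm_EH msm_tr[OF msm_MD[OF msm_EE]] Gt_def[symmetric], of i]
    by (simp add: algebra_simps MD_tr)
  also have "mm (MD i EH) (mm eM (tr (MD j EE))) = mm (mm (MD i EH) (tr EE)) (Gt j)"
    by (simp add: Gt_def eM_alt mm_assoc)
  also have "\<dots> = - mm (Gt i) (Gt j)"
    by (simp add: D1b mm_uminusL Gt_def)
  finally show ?thesis by (metis diff_minus_eq_add)
qed

theorem T2: "RTM i j = - MD j (Gt i) - mm (Gt j) (Gt i) + MD i (Gt j) + mm (Gt i) (Gt j)"
proof -
  have "mm (mm G (RM i j)) gM = mm (mm EH (RR i j)) (tr EE)"
    by (simp add: RM_def mm_assoc ETg) (simp add: EH_def mm_assoc)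
  then have "RTM i j = - mm (mm EH (RR i j)) (tr EE)" by (simp add: RTM_def)
  also have "\<dots> = mm (mm EH (mm (de i) (de j))) (tr EE) - mm (mm EH (mm (de j) (de i))) (tr EE)"
    by (simp add: RR_def mm_uminusR mm_uminusL mm_diffR mm_diffL)
  also have "\<dots> = - MD j (Gt i) - mm (Gt j) (Gt i) + MD i (Gt j) + mm (Gt i) (Gt j)"
    by (simp add: Q2 MD_comm[of EE i j] algebra_simps)
  finally show ?thesis .
qed

lemma NB2: "msm A \<Longrightarrow> NB i (NB j A) = MD i (MD j A) - mm (MD i A) (de j) - mm A (MD i (de j))
   - mm (MD j A) (de i) + mm A (mm (de j) (de i))"
  by (simp add: NB_def MD_diff MD_mm mm_diffL mm_assoc algebra_simps)

lemma V1: "mm EE (mm (de i) eM) = 0"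
  by (simp add: mm_assoc[symmetric] D2 mm_diffL) (simp add: mm_assoc F4)

theorem T3: "NB i (NB j EE) - NB j (NB i EE) = mm (RM i j) EE"
proof -
  have dd: "MD i (de j) = MD j (de i)" by (simp add: de_def MD_comm)
  have "NB i (NB j EE) - NB j (NB i EE) = mm EE (RR i j)"
    by (simp add: NB2 dd MD_comm[of EE i j] RR_def mm_uminusR mm_diffR algebra_simps)
  also have "\<dots> = mm (RM i j) EE"
  proof -
    have a: "\<And>i j. mm EE (mm (de i) (mm (de j) eM)) = mm EE (mm (de i) (de j))"
    proof -
      fix i j
      have "mm (de j) eM = de j - mm eM (de j)" using D4[of j] by (simp add: algebra_simps)
      then show "mm EE (mm (de i) (mm (de j) eM)) = mm EE (mm (de i) (de j))"
        apply (simp add: mm_diffR) apply (simp add: mm_assoc[symmetric]) by (simp add: mm_assoc V1 mm_zeroL)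
    qed
    show ?thesis
      by (simp add: RM_def eM_def[symmetric] mm_assoc) (simp add: RR_def mm_uminusR mm_uminusL mm_diffR mm_diffL mm_assoc a)
  qed
  finally show ?thesis .
qed

lemma NT2: "msm B \<Longrightarrow> NT i (NT j B) = MD i (MD j B) - mm (MD i (de j)) B - mm (de j) (MD i B)
   - mm (de i) (MD j B) + mm (de i) (mm (de j) B)"
  by (simp add: NT_def MD_diff MD_mm mm_diffR algebra_simps)

lemma V2: "mm eM (mm (de j) (tr EE)) = 0"
  by (simp add: D6 mm_diffR F4')

theorem T4: "NT i (NT j (tr EE)) - NT j (NT i (tr EE)) = mm (tr EE) (RTM i j)"
proof -
  have dd: "MD i (de j) = MD j (de i)" by (simp add: de_def MD_comm)
  have "NT i (NT j (tr EE)) - NT j (NT i (tr EE)) = - mm (RR i j) (tr EE)"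
    by (simp add: NT2 dd MD_comm[of "tr EE" i j] RR_def mm_uminusL mm_diffL mm_assoc algebra_simps)
  also have "\<dots> = mm (tr EE) (RTM i j)"
  proof -
    have a: "\<And>i j. mm eM (mm (de i) (mm (de j) (tr EE))) = mm (de i) (mm (de j) (tr EE))"
    proof -
      fix i j
      have "mm eM (de i) = de i - mm (de i) eM" using D4[of i] by (simp add: algebra_simps)
      then show "mm eM (mm (de i) (mm (de j) (tr EE))) = mm (de i) (mm (de j) (tr EE))"
        by (simp add: mm_assoc[symmetric]) (simp add: mm_diffL mm_assoc V2 mm_zeroR)
    qed
    have "mm (mm G (RM i j)) gM = mm (mm EH (RR i j)) (tr EE)"
      by (simp add: RM_def mm_assoc ETg) (simp add: EH_def mm_assoc)
    then have "mm (tr EE) (RTM i j) = - mm eM (mm (RR i j) (tr EE))"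
      by (simp add: RTM_def mm_uminusR eM_alt mm_assoc)
    also have "\<dots> = - mm (RR i j) (tr EE)"
      by (simp add: RR_def mm_uminusR mm_uminusL mm_diffR mm_diffL mm_assoc a)
    finally show ?thesis by simp
  qed
  finally show ?thesis .
qed


definition AA where "AA i j l = (\<Sum>\<alpha>\<in>UNIV. mul (D i (EE j \<alpha>)) (EE l \<alpha>))"
definition BB where "BB i j l = (\<Sum>\<alpha>\<in>UNIV. mul (EE l \<alpha>) (D i (EE j \<alpha>)))"

lemma smEE[simp]: "sm (EE k \<alpha>)" using msm_EE unfolding msm_def by blast
lemma smAA[simp]: "sm (AA i j l)" by (simp add: AA_def sm_sum sm_mul sm_D)
lemma smBB[simp]: "sm (BB i j l)" by (simp add: BB_def sm_sum sm_mul sm_D)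
lemma EEsym: "D i (EE j \<alpha>) = D j (EE i \<alpha>)" by (simp add: EE_def D_comm smX)

lemma DgM: "D i (gM j l) = AA i j l + BB i l j"
  by (simp add: gM_def mm_def tr_def D_sum sm_mul D_mul sum.distrib AA_def BB_def)
lemma AAsym: "AA j l i = AA l j i" by (simp add: AA_def EEsym)
lemma BBsym1: "BB j i l = BB i j l" by (simp add: BB_def EEsym)
lemma BBsym2: "BB l i j = BB i l j" by (simp add: BB_def EEsym)

lemma C1: "half (D i (gM j l) + D j (gM l i) - D l (gM j i)) + half (AA i j l - BB i j l) = AA i j l"
proof -
  have "D i (gM j l) + D j (gM l i) - D l (gM j i) = AA i j l + BB i j l"
    by (simp add: DgM AAsym BBsym1 BBsym2)
  then show ?thesis
    by (simp add: half_add half_diff) (metis add.commute add_diff_cancel diff_add_eq half_twice smAA)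
qed
lemma C2: "half (D i (gM j l) + D j (gM l i) - D l (gM j i)) - half (AA i j l - BB i j l) = BB i j l"
proof -
  have "D i (gM j l) + D j (gM l i) - D l (gM j i) = AA i j l + BB i j l"
    by (simp add: DgM AAsym BBsym1 BBsym2)
  then show ?thesis
    by (simp add: half_add half_diff) (metis add_diff_cancel_left half_twice smBB)
qed


lemma Gm_entry: "Gm i j k = (\<Sum>l\<in>UNIV. mul (AA i j l) (G l k))"
proof -
  have "Gm i = mm (mm (MD i EE) (tr EE)) G" by (simp add: Gm_def ET_def mm_assoc)
  then show ?thesis by (simp add: mm_def AA_def tr_def MD_def)
qed

lemma Gt_entry: "Gt i k j = (\<Sum>l\<in>UNIV. mul (G k l) (BB i j l))"
proof -
  have "Gt i = mm G (mm EE (tr (MD i EE)))" by (simp add: Gt_def EH_def mm_assoc)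
  then show ?thesis by (simp add: mm_def BB_def tr_def MD_def)
qed

definition NBr where "NBr i z \<beta> = D i (z \<beta>) - (\<Sum>\<alpha>\<in>UNIV. mul (z \<alpha>) (de i \<alpha> \<beta>))"
definition NTc where "NTc i w \<alpha> = D i (w \<alpha>) - (\<Sum>\<beta>\<in>UNIV. mul (de i \<alpha> \<beta>) (w \<beta>))"

lemma NB_row: "NB i A k = NBr i (A k)"
  by (simp add: NB_def NBr_def MD_def mm_def fun_eq_iff)
lemma NT_col: "(\<lambda>\<alpha>. NT i B \<alpha> k) = NTc i (\<lambda>\<beta>. B \<beta> k)"
  by (simp add: NT_def NTc_def MD_def mm_def fun_eq_iff)

lemma T1_entry: "RM i j k l = - D j (Gm i k l) - (\<Sum>p\<in>UNIV. mul (Gm i k p) (Gm j p l)) + D i (Gm j k l)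
    + (\<Sum>p\<in>UNIV. mul (Gm j k p) (Gm i p l))"
  using fun_cong[OF fun_cong[OF T1[of i j], of k], of l] by (simp add: MD_def mm_def)

lemma T2_entry: "RTM i j l k = - D j (Gt i l k) - (\<Sum>p\<in>UNIV. mul (Gt j l p) (Gt i p k)) + D i (Gt j l k)
    + (\<Sum>p\<in>UNIV. mul (Gt i l p) (Gt j p k))"
  using fun_cong[OF fun_cong[OF T2[of i j], of l], of k] by (simp add: MD_def mm_def)

lemma T3_entry: "NBr i (NBr j (EE k)) \<beta> - NBr j (NBr i (EE k)) \<beta> = (\<Sum>l\<in>UNIV. mul (RM i j k l) (EE l \<beta>))"
  using fun_cong[OF fun_cong[OF T3[of i j], of k], of \<beta>] by (simp add: NB_row mm_def)

lemma T4_entry: "NTc i (NTc j (EE k)) \<alpha> - NTc j (NTc i (EE k)) \<alpha> = (\<Sum>l\<in>UNIV. mul (EE l \<alpha>) (RTM i j l k))"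
proof -
  have a: "\<And>i. (\<lambda>\<beta>. tr EE \<beta> k) = EE k" by (simp add: tr_def)
  have "\<And>i j. NT i (NT j (tr EE)) \<alpha> k = NTc i (NTc j (EE k)) \<alpha>"
    using NT_col a by metis
  then show ?thesis
    using fun_cong[OF fun_cong[OF T4[of i j], of \<alpha>], of k] by (simp add: mm_def tr_def)
qed

lemma RTM_entry: "RTM i j l k = - (\<Sum>q\<in>UNIV. \<Sum>p\<in>UNIV. mul (mul (G l q) (RM i j q p)) (gM p k))"
proof -
  have "RTM i j l k = - (\<Sum>p\<in>UNIV. \<Sum>q\<in>UNIV. mul (mul (G l q) (RM i j q p)) (gM p k))"
    using msm_G msm_RM msm_gM unfolding RTM_def mm_def msm_def
    by (simp add: mul_sumL sm_mul)
  then show ?thesis by (subst sum.swap) simp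
qed

end



definition ld :: "(real^'n::finite \<Rightarrow> real) \<Rightarrow> real^'n \<Rightarrow> 'n \<Rightarrow> bool" where
  "ld f x i \<longleftrightarrow> (\<lambda>t. f (x + t *\<^sub>R axis i 1)) differentiable (at 0)"

lemma ld_DERIV: "ld f x i \<Longrightarrow> ((\<lambda>t. f (x + t *\<^sub>R axis i 1)) has_real_derivative pd i f x) (at 0)"
  unfolding ld_def pd_def by (simp add: DERIV_deriv_iff_real_differentiable)

lemma DERIV_ld: "((\<lambda>t. f (x + t *\<^sub>R axis i 1)) has_real_derivative D) (at 0) \<Longrightarrow> ld f x i \<and> pd i f x = D"
  unfolding ld_def pd_def using DERIV_imp_deriv real_differentiable_def by blast

lemma ld_add: "ld f x i \<Longrightarrow> ld g x i \<Longrightarrow> ld (\<lambda>y. f y + g y) x i \<and> pd i (\<lambda>y. f y + g y) x = pd i f x + pd i g x"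
  by (rule DERIV_ld) (intro DERIV_add ld_DERIV)
lemma ld_mult: "ld f x i \<Longrightarrow> ld g x i \<Longrightarrow> ld (\<lambda>y. f y * g y) x i \<and> pd i (\<lambda>y. f y * g y) x = pd i f x * g x + f x * pd i g x"
  by (rule DERIV_ld) (auto intro!: derivative_eq_intros ld_DERIV)
lemma ld_cmult: "ld f x i \<Longrightarrow> ld (\<lambda>y. c * f y) x i \<and> pd i (\<lambda>y. c * f y) x = c * pd i f x"
  by (rule DERIV_ld) (intro DERIV_cmult ld_DERIV)
lemma ld_const: "ld (\<lambda>y. c) x i \<and> pd i (\<lambda>y. c) x = 0"
  by (rule DERIV_ld) simp
lemma ld_sum: "finite S \<Longrightarrow> (\<And>j. j \<in> S \<Longrightarrow> ld (u j) x i) \<Longrightarrow>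
   ld (\<lambda>y. \<Sum>j\<in>S. u j y) x i \<and> pd i (\<lambda>y. \<Sum>j\<in>S. u j y) x = (\<Sum>j\<in>S. pd i (u j) x)"
  by (rule DERIV_ld) (intro DERIV_sum ld_DERIV)

lemma pd_const_fun: "pd i (\<lambda>y. c) = (\<lambda>x. 0)"
  using ld_const by blast

lemma pds_const: "pds ks (\<lambda>y. c) = (if ks = [] then (\<lambda>y. c) else (\<lambda>y. 0))"
  by (induction ks) (auto simp: pd_const_fun)

lemma pds_append: "pds (ks @ js) f = pds ks (pds js f)"
  by (induction ks) auto

context
  fixes U :: "(real^'n::finite) set"
  assumes U: "open U"
begin

lemma ev_line: "x \<in> U \<Longrightarrow> eventually (\<lambda>t. x + t *\<^sub>R axis i 1 \<in> U) (nhds (0::real))"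
proof -
  assume x: "x \<in> U"
  then obtain e where e: "e > 0" "ball x e \<subseteq> U" using U open_contains_ball by blast
  show ?thesis unfolding eventually_nhds_metric
  proof (intro exI[of _ e] conjI allI impI)
    fix t :: real assume "dist t 0 < e"
    then have "x + t *\<^sub>R axis i 1 \<in> ball x e" by (simp add: dist_norm)
    then show "x + t *\<^sub>R axis i 1 \<in> U" using e by blast
  qed (rule e)
qed

lemma pd_cong: "x \<in> U \<Longrightarrow> (\<And>y. y \<in> U \<Longrightarrow> f y = g y) \<Longrightarrow> pd i f x = pd i g x"
  unfolding pd_def
  by (rule deriv_cong_ev) (auto intro: eventually_mono[OF ev_line[of x i]])

lemma ld_cong: "x \<in> U \<Longrightarrow> (\<And>y. y \<in> U \<Longrightarrow> f y = g y) \<Longrightarrow> ld f x i \<longleftrightarrow> ld g x i"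
proof -
  assume x: "x \<in> U" and fg: "\<And>y. y \<in> U \<Longrightarrow> f y = g y"
  have ev: "eventually (\<lambda>t. f (x + t *\<^sub>R axis i 1) = g (x + t *\<^sub>R axis i 1)) (nhds (0::real))"
    by (rule eventually_mono[OF ev_line[OF x, of i]]) (simp add: fg)
  show ?thesis unfolding ld_def real_differentiable_def
    using DERIV_cong_ev[OF refl ev refl] by blast
qed

lemma pds_cong: "(\<And>y. y \<in> U \<Longrightarrow> f y = g y) \<Longrightarrow> x \<in> U \<Longrightarrow> pds ks f x = pds ks g x"
proof (induction ks arbitrary: x)
  case Nil then show ?case by simp
next
  case (Cons k ks) then show ?case by (auto intro: pd_cong)
qed

lemma smooth_ld: "smooth_on U f \<Longrightarrow> x \<in> U \<Longrightarrow> ld (pds ks f) x i"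
  unfolding smooth_on_def ld_def by blast

lemma smooth_cont: "smooth_on U f \<Longrightarrow> continuous_on U (pds ks f)"
  unfolding smooth_on_def by blast

lemma smooth_ld0: "smooth_on U f \<Longrightarrow> x \<in> U \<Longrightarrow> ld f x i"
  using smooth_ld[of f x "[]"] by simp

lemma smooth_onI:
  assumes "\<And>ks. \<exists>h. (\<forall>y\<in>U. pds ks f y = h y) \<and> continuous_on U h \<and> (\<forall>i. \<forall>x\<in>U. ld h x i)"
  shows "smooth_on U f"
  unfolding smooth_on_def
proof (intro allI conjI ballI)
  fix ks
  obtain h where h: "\<forall>y\<in>U. pds ks f y = h y" "continuous_on U h" "\<forall>i. \<forall>x\<in>U. ld h x i"
    using assms by blast
  show "continuous_on U (pds ks f)" using h(1,2) continuous_on_cong by fastforce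
  fix i x assume "x \<in> U"
  then show "(\<lambda>t. pds ks f (x + t *\<^sub>R axis i 1)) differentiable at 0"
    using ld_cong[of x "pds ks f" h i] h by (simp add: ld_def)
qed

lemma smooth_cong: "(\<And>y. y \<in> U \<Longrightarrow> f y = g y) \<Longrightarrow> smooth_on U f \<Longrightarrow> smooth_on U g"
proof (rule smooth_onI)
  fix ks assume fg: "\<And>y. y \<in> U \<Longrightarrow> f y = g y" and f: "smooth_on U f"
  have "\<forall>y\<in>U. pds ks g y = pds ks f y" using pds_cong[of g f] fg by metis
  moreover have "continuous_on U (pds ks f)" using f by (rule smooth_cont)
  moreover have "\<forall>i. \<forall>x\<in>U. ld (pds ks f) x i" using f smooth_ld by blast
  ultimately show "\<exists>h. (\<forall>y\<in>U. pds ks g y = h y) \<and> continuous_on U h \<and> (\<forall>i. \<forall>x\<in>U. ld h x i)"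
    by blast
qed

lemma smooth_pds: "smooth_on U f \<Longrightarrow> smooth_on U (pds js f)"
  unfolding smooth_on_def by (simp add: pds_append[symmetric])

lemma smooth_pd: "smooth_on U f \<Longrightarrow> smooth_on U (pd i f)"
  using smooth_pds[of f "[i]"] by simp

lemma smooth_const: "smooth_on U (\<lambda>y. c)"
  unfolding smooth_on_def
proof (intro allI conjI ballI)
  fix ks i x
  show "continuous_on U (pds ks (\<lambda>y. c))" by (simp add: pds_const)
  show "(\<lambda>t. pds ks (\<lambda>y. c) (x + t *\<^sub>R axis i 1)) differentiable at 0"
    by (simp add: pds_const)
qed

lemma pds_add: "smooth_on U f \<Longrightarrow> smooth_on U g \<Longrightarrow> x \<in> U \<Longrightarrow>
   pds ks (\<lambda>y. f y + g y) x = pds ks f x + pds ks g x"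
proof (induction ks arbitrary: x)
  case Nil then show ?case by simp
next
  case (Cons k ks)
  have "pds (k # ks) (\<lambda>y. f y + g y) x = pd k (\<lambda>y. pds ks f y + pds ks g y) x"
    unfolding pds.simps by (rule pd_cong) (use Cons in auto)
  also have "\<dots> = pd k (pds ks f) x + pd k (pds ks g) x"
    using ld_add[OF smooth_ld smooth_ld] Cons by blast
  finally show ?case by simp
qed

lemma smooth_add: "smooth_on U f \<Longrightarrow> smooth_on U g \<Longrightarrow> smooth_on U (\<lambda>y. f y + g y)"
proof (rule smooth_onI)
  fix ks assume f: "smooth_on U f" and g: "smooth_on U g"
  have "\<forall>y\<in>U. pds ks (\<lambda>y. f y + g y) y = pds ks f y + pds ks g y" using pds_add f g by blast
  moreover have "continuous_on U (\<lambda>y. pds ks f y + pds ks g y)"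
    using f g by (intro continuous_on_add smooth_cont)
  moreover have "\<forall>i. \<forall>x\<in>U. ld (\<lambda>y. pds ks f y + pds ks g y) x i"
    using f g ld_add smooth_ld by blast
  ultimately show "\<exists>h. (\<forall>y\<in>U. pds ks (\<lambda>y. f y + g y) y = h y) \<and> continuous_on U h \<and> (\<forall>i. \<forall>x\<in>U. ld h x i)"
    by (intro exI[of _ "\<lambda>y. pds ks f y + pds ks g y"]) simp
qed

lemma pds_cmult: "smooth_on U f \<Longrightarrow> x \<in> U \<Longrightarrow> pds ks (\<lambda>y. c * f y) x = c * pds ks f x"
proof (induction ks arbitrary: x)
  case Nil then show ?case by simp
next
  case (Cons k ks)
  have "pds (k # ks) (\<lambda>y. c * f y) x = pd k (\<lambda>y. c * pds ks f y) x"
    unfolding pds.simps by (rule pd_cong) (use Cons in auto)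
  also have "\<dots> = c * pd k (pds ks f) x"
    using ld_cmult[OF smooth_ld] Cons by blast
  finally show ?case by simp
qed

lemma smooth_cmult: "smooth_on U f \<Longrightarrow> smooth_on U (\<lambda>y. c * f y)"
proof (rule smooth_onI)
  fix ks assume f: "smooth_on U f"
  have "\<forall>y\<in>U. pds ks (\<lambda>y. c * f y) y = c * pds ks f y" using pds_cmult f by blast
  moreover have "continuous_on U (\<lambda>y. c * pds ks f y)"
    using f by (intro continuous_on_mult continuous_on_const smooth_cont)
  moreover have "\<forall>i. \<forall>x\<in>U. ld (\<lambda>y. c * pds ks f y) x i"
    using f ld_cmult smooth_ld by blast
  ultimately show "\<exists>h. (\<forall>y\<in>U. pds ks (\<lambda>y. c * f y) y = h y) \<and> continuous_on U h \<and> (\<forall>i. \<forall>x\<in>U. ld h x i)"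
    by (intro exI[of _ "\<lambda>y. c * pds ks f y"]) simp
qed

lemma smooth_sum: "finite S \<Longrightarrow> (\<And>j. j \<in> S \<Longrightarrow> smooth_on U (u j)) \<Longrightarrow> smooth_on U (\<lambda>y. \<Sum>j\<in>S. u j y)"
  by (induction S rule: finite_induct) (auto intro: smooth_add smooth_const)

lemma pds_sum: "finite S \<Longrightarrow> (\<And>j. j \<in> S \<Longrightarrow> smooth_on U (u j)) \<Longrightarrow> x \<in> U \<Longrightarrow>
   pds ks (\<lambda>y. \<Sum>j\<in>S. u j y) x = (\<Sum>j\<in>S. pds ks (u j) x)"
proof (induction S rule: finite_induct)
  case empty then show ?case by (simp add: pds_const)
next
  case (insert a S)
  have "pds ks (\<lambda>y. \<Sum>j\<in>insert a S. u j y) x = pds ks (\<lambda>y. u a y + (\<Sum>j\<in>S. u j y)) x"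
    using insert by simp
  also have "\<dots> = pds ks (u a) x + pds ks (\<lambda>y. \<Sum>j\<in>S. u j y) x"
    using insert by (intro pds_add smooth_sum) auto
  finally show ?case using insert by simp
qed

end

fun sel :: "bool list \<Rightarrow> 'a list \<Rightarrow> 'a list" where
  "sel (c # cs) (k # ks) = (if c then k # sel cs ks else sel cs ks)"
| "sel _ _ = []"

definition BL :: "nat \<Rightarrow> bool list set" where "BL n = {cs. length cs = n}"

lemma finite_BL[simp]: "finite (BL n)"
proof -
  have "BL n = {xs. set xs \<subseteq> UNIV \<and> length xs = n}" by (auto simp: BL_def)
  then show ?thesis using finite_lists_length_eq[of "UNIV::bool set" n] by simp
qed

lemma BL_Suc: "BL (Suc n) = Cons True ` BL n \<union> Cons False ` BL n"
proof
  show "BL (Suc n) \<subseteq> Cons True ` BL n \<union> Cons False ` BL n"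
  proof
    fix cs assume "cs \<in> BL (Suc n)"
    then obtain c cs' where "cs = c # cs'" "length cs' = n" by (cases cs) (auto simp: BL_def)
    then show "cs \<in> Cons True ` BL n \<union> Cons False ` BL n" by (cases c) (auto simp: BL_def)
  qed
qed (auto simp: BL_def)

lemma sum_BL_Suc: "(\<Sum>cs\<in>BL (Suc n). F cs) = (\<Sum>cs\<in>BL n. F (True # cs)) + (\<Sum>cs\<in>BL n. F (False # cs))"
  unfolding BL_Suc
  by (subst sum.union_disjoint) (auto simp: sum.reindex)

lemma BL_0: "BL 0 = {[]}" by (auto simp: BL_def)

context
  fixes U :: "(real^'n::finite) set"
  assumes U: "open U"
begin

lemma pds_mult: "smooth_on U f \<Longrightarrow> smooth_on U g \<Longrightarrow> x \<in> U \<Longrightarrow>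
  pds ks (\<lambda>y. f y * g y) x = (\<Sum>cs\<in>BL (length ks). pds (sel cs ks) f x * pds (sel (map Not cs) ks) g x)"
proof (induction ks arbitrary: x)
  case Nil then show ?case by (simp add: BL_0)
next
  case (Cons k ks)
  let ?A = "\<lambda>cs. pds (sel cs ks) f" and ?B = "\<lambda>cs. pds (sel (map Not cs) ks) g"
  have "pds (k # ks) (\<lambda>y. f y * g y) x = pd k (\<lambda>y. \<Sum>cs\<in>BL (length ks). ?A cs y * ?B cs y) x"
    unfolding pds.simps by (rule pd_cong[OF U]) (use Cons in auto)
  also have "\<dots> = (\<Sum>cs\<in>BL (length ks). pd k (\<lambda>y. ?A cs y * ?B cs y) x)"
  proof -
    have "\<And>cs. ld (\<lambda>y. ?A cs y * ?B cs y) x k"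
      using ld_mult smooth_ld[OF U] Cons.prems by blast
    from ld_sum[of "BL (length ks)" "\<lambda>cs y. ?A cs y * ?B cs y", OF finite_BL this] show ?thesis by blast
  qed
  also have "\<dots> = (\<Sum>cs\<in>BL (length ks). pd k (?A cs) x * ?B cs x + ?A cs x * pd k (?B cs) x)"
  proof (rule sum.cong[OF refl])
    fix cs
    show "pd k (\<lambda>y. ?A cs y * ?B cs y) x = pd k (?A cs) x * ?B cs x + ?A cs x * pd k (?B cs) x"
      by (rule ld_mult[THEN conjunct2]) (use smooth_ld[OF U] Cons.prems in blast)+
  qed
  also have "\<dots> = (\<Sum>cs\<in>BL (length (k # ks)). pds (sel cs (k # ks)) f x * pds (sel (map Not cs) (k # ks)) g x)"
    by (simp add: sum_BL_Suc sum.distrib)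
  finally show ?case .
qed

lemma smooth_mult: "smooth_on U f \<Longrightarrow> smooth_on U g \<Longrightarrow> smooth_on U (\<lambda>y. f y * g y)"
proof (rule smooth_onI[OF U])
  fix ks assume f: "smooth_on U f" and g: "smooth_on U g"
  let ?h = "\<lambda>y. \<Sum>cs\<in>BL (length ks). pds (sel cs ks) f y * pds (sel (map Not cs) ks) g y"
  have "\<forall>y\<in>U. pds ks (\<lambda>y. f y * g y) y = ?h y" using pds_mult f g by blast
  moreover have "continuous_on U ?h"
    using f g by (intro continuous_on_sum continuous_on_mult smooth_cont[OF U])
  moreover have "\<forall>i. \<forall>x\<in>U. ld ?h x i"
  proof (intro allI ballI)
    fix i x assume "x \<in> U"
    then have "\<And>cs. ld (\<lambda>y. pds (sel cs ks) f y * pds (sel (map Not cs) ks) g y) x i"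
      using ld_mult smooth_ld[OF U] f g by blast
    from ld_sum[of "BL (length ks)" "\<lambda>cs y. pds (sel cs ks) f y * pds (sel (map Not cs) ks) g y", OF finite_BL this]
    show "ld ?h x i" by blast
  qed
  ultimately show "\<exists>h. (\<forall>y\<in>U. pds ks (\<lambda>y. f y * g y) y = h y) \<and> continuous_on U h \<and> (\<forall>i. \<forall>x\<in>U. ld h x i)"
    by (intro exI[of _ ?h]) simp
qed


lemma line_DERIV: "smooth_on U f \<Longrightarrow> y + s *\<^sub>R axis i 1 \<in> U \<Longrightarrow>
  ((\<lambda>t. f (y + t *\<^sub>R axis i 1)) has_real_derivative pd i f (y + s *\<^sub>R axis i 1)) (at s)"
proof -
  assume f: "smooth_on U f" and z: "y + s *\<^sub>R axis i 1 \<in> U"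
  have "((\<lambda>u. f ((y + s *\<^sub>R axis i 1) + u *\<^sub>R axis i 1)) has_real_derivative pd i f (y + s *\<^sub>R axis i 1)) (at 0)"
    by (rule ld_DERIV) (rule smooth_ld0[OF U f z])
  moreover have "(\<lambda>u. f ((y + s *\<^sub>R axis i 1) + u *\<^sub>R axis i 1)) = (\<lambda>u. f (y + (u + s) *\<^sub>R axis i 1))"
    by (simp add: algebra_simps)
  ultimately have "((\<lambda>u. f (y + (u + s) *\<^sub>R axis i 1)) has_real_derivative pd i f (y + s *\<^sub>R axis i 1)) (at 0)"
    by simp
  then show ?thesis using DERIV_shift[of "\<lambda>t. f (y + t *\<^sub>R axis i 1)" _ 0 s] by simp
qed

lemma mvt2d:
  assumes f: "smooth_on U f" and h: "h > 0" and cb: "cball x (2 * h) \<subseteq> U"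
  shows "\<exists>p. dist p x \<le> 2 * h \<and>
    f (x + h *\<^sub>R axis i 1 + h *\<^sub>R axis j 1) - f (x + h *\<^sub>R axis i 1) - f (x + h *\<^sub>R axis j 1) + f x
      = h * h * pd j (pd i f) p"
proof -
  define a where "a = (axis i 1 :: real^'n)"
  define b where "b = (axis j 1 :: real^'n)"
  have na: "norm a = 1" and nb: "norm b = 1" by (simp_all add: a_def b_def)
  have inU: "x + s *\<^sub>R a + t *\<^sub>R b \<in> U" if "0 \<le> s" "s \<le> h" "0 \<le> t" "t \<le> h" for s t
  proof -
    have "norm (s *\<^sub>R a + t *\<^sub>R b) \<le> norm (s *\<^sub>R a) + norm (t *\<^sub>R b)" by (rule norm_triangle_ineq)
    also have "\<dots> = s + t" using that na nb by simp
    finally have "dist (x + s *\<^sub>R a + t *\<^sub>R b) x \<le> 2 * h" using that by (simp add: dist_norm)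
    then show ?thesis using cb by (auto simp: dist_commute)
  qed
  define \<phi> where "\<phi> s = f ((x + h *\<^sub>R b) + s *\<^sub>R a) - f (x + s *\<^sub>R a)" for s
  have d\<phi>: "(\<phi> has_real_derivative (pd i f ((x + h *\<^sub>R b) + s *\<^sub>R a) - pd i f (x + s *\<^sub>R a))) (at s)"
    if "0 \<le> s" "s \<le> h" for s
    unfolding \<phi>_def a_def
  proof (intro DERIV_diff line_DERIV[OF f])
    show "x + h *\<^sub>R b + s *\<^sub>R axis i 1 \<in> U" using inU[of s h] that h by (simp add: a_def algebra_simps)
    show "x + s *\<^sub>R axis i 1 \<in> U" using inU[of s 0] that h by (simp add: a_def)
  qed
  obtain s1 where s1: "0 < s1" "s1 < h"
    "\<phi> h - \<phi> 0 = (h - 0) * (pd i f ((x + h *\<^sub>R b) + s1 *\<^sub>R a) - pd i f (x + s1 *\<^sub>R a))"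
    using MVT2[OF h d\<phi>] by blast
  define \<psi> where "\<psi> t = pd i f ((x + s1 *\<^sub>R a) + t *\<^sub>R b)" for t
  have d\<psi>: "(\<psi> has_real_derivative pd j (pd i f) ((x + s1 *\<^sub>R a) + t *\<^sub>R b)) (at t)"
    if "0 \<le> t" "t \<le> h" for t
    unfolding \<psi>_def b_def
    by (rule line_DERIV[OF smooth_pd[OF U f]]) (use inU[of s1 t] that s1 in \<open>simp add: b_def\<close>)
  obtain t1 where t1: "0 < t1" "t1 < h"
    "\<psi> h - \<psi> 0 = (h - 0) * pd j (pd i f) ((x + s1 *\<^sub>R a) + t1 *\<^sub>R b)"
    using MVT2[OF h d\<psi>] by blast
  define p where "p = (x + s1 *\<^sub>R a) + t1 *\<^sub>R b"
  have "dist p x = norm (s1 *\<^sub>R a + t1 *\<^sub>R b)" by (simp add: p_def dist_norm)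
  also have "\<dots> \<le> norm (s1 *\<^sub>R a) + norm (t1 *\<^sub>R b)" by (rule norm_triangle_ineq)
  also have "\<dots> \<le> 2 * h" using s1 t1 na nb by simp
  finally have dp: "dist p x \<le> 2 * h" .
  have "f (x + h *\<^sub>R a + h *\<^sub>R b) - f (x + h *\<^sub>R a) - f (x + h *\<^sub>R b) + f x = \<phi> h - \<phi> 0"
    by (simp add: \<phi>_def algebra_simps)
  also have "\<dots> = h * (\<psi> h - \<psi> 0)"
    using s1(3) by (simp add: \<psi>_def algebra_simps)
  also have "\<dots> = h * h * pd j (pd i f) p" using t1(3) by (simp add: p_def)
  finally show ?thesis using dp unfolding a_def b_def by blast
qed

lemma schwarz:
  assumes f: "smooth_on U f" and x: "x \<in> U"
  shows "pd i (pd j f) x = pd j (pd i f) x"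
proof (rule ccontr)
  assume ne: "pd i (pd j f) x \<noteq> pd j (pd i f) x"
  define \<epsilon> where "\<epsilon> = \<bar>pd i (pd j f) x - pd j (pd i f) x\<bar> / 2"
  have e: "\<epsilon> > 0" using ne by (simp add: \<epsilon>_def)
  have c1: "isCont (pd j (pd i f)) x"
    using smooth_cont[OF U f, of "[j, i]"] continuous_on_eq_continuous_at[OF U] x by auto
  have c2: "isCont (pd i (pd j f)) x"
    using smooth_cont[OF U f, of "[i, j]"] continuous_on_eq_continuous_at[OF U] x by auto
  obtain d1 where d1: "d1 > 0" "\<And>y. dist y x < d1 \<Longrightarrow> dist (pd j (pd i f) y) (pd j (pd i f) x) < \<epsilon>"
    using c1 e unfolding continuous_at_eps_delta by blast
  obtain d2 where d2: "d2 > 0" "\<And>y. dist y x < d2 \<Longrightarrow> dist (pd i (pd j f) y) (pd i (pd j f) x) < \<epsilon>"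
    using c2 e unfolding continuous_at_eps_delta by blast
  obtain r where r: "r > 0" "cball x r \<subseteq> U" using U x open_contains_cball by blast
  define h where "h = min (min d1 d2) r / 4"
  have h: "h > 0" using d1 d2 r by (simp add: h_def)
  have "2 * h \<le> r" using d1 d2 r by (simp add: h_def)
  then have cb: "cball x (2 * h) \<subseteq> U" using r(2) by (meson order.trans subset_cball)
  obtain p where p: "dist p x \<le> 2 * h"
    "f (x + h *\<^sub>R axis i 1 + h *\<^sub>R axis j 1) - f (x + h *\<^sub>R axis i 1) - f (x + h *\<^sub>R axis j 1) + f x
      = h * h * pd j (pd i f) p"
    using mvt2d[OF f h cb, of i j] by blast
  obtain q where q: "dist q x \<le> 2 * h"
    "f (x + h *\<^sub>R axis j 1 + h *\<^sub>R axis i 1) - f (x + h *\<^sub>R axis j 1) - f (x + h *\<^sub>R axis i 1) + f x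
      = h * h * pd i (pd j f) q"
    using mvt2d[OF f h cb, of j i] by blast
  have "h * h * pd j (pd i f) p = h * h * pd i (pd j f) q"
    using p(2) q(2) by (simp add: algebra_simps)
  then have pq: "pd j (pd i f) p = pd i (pd j f) q" using h by simp
  have "dist p x < d1" using p(1) h by (simp add: h_def)
  then have "dist (pd j (pd i f) p) (pd j (pd i f) x) < \<epsilon>" by (rule d1(2))
  moreover have "dist q x < d2" using q(1) h by (simp add: h_def)
  then have "dist (pd i (pd j f) q) (pd i (pd j f) x) < \<epsilon>" by (rule d2(2))
  ultimately show False using pq unfolding dist_real_def \<epsilon>_def by (simp add: abs_if split: if_split_asm)
qed


lemma pds_swap: "smooth_on U f \<Longrightarrow> x \<in> U \<Longrightarrow> pds (xs @ i # j # ys) f x = pds (xs @ j # i # ys) f x"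
proof -
  assume f: "smooth_on U f" and x: "x \<in> U"
  have "\<And>y. y \<in> U \<Longrightarrow> pds (i # j # ys) f y = pds (j # i # ys) f y"
    using schwarz[OF smooth_pds[OF U f]] by simp
  then have "pds xs (pds (i # j # ys) f) x = pds xs (pds (j # i # ys) f) x"
    by (intro pds_cong[OF U] x) blast
  then show ?thesis by (simp add: pds_append)
qed

lemma pds_tofront: "smooth_on U f \<Longrightarrow> x \<in> U \<Longrightarrow> pds (xs @ k # ys) f x = pds (k # xs @ ys) f x"
proof (induction xs arbitrary: x)
  case Nil then show ?case by simp
next
  case (Cons a xs)
  have "pds ((a # xs) @ k # ys) f x = pd a (pds (k # xs @ ys) f) x"
    unfolding append_Cons pds.simps by (rule pd_cong[OF U]) (use Cons in auto)
  also have "\<dots> = pds ([] @ a # k # xs @ ys) f x" by simp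
  also have "\<dots> = pds ([] @ k # a # xs @ ys) f x" by (rule pds_swap) (use Cons in auto)
  finally show ?case by simp
qed

lemma pds_perm: "smooth_on U f \<Longrightarrow> mset ks = mset ks' \<Longrightarrow> x \<in> U \<Longrightarrow> pds ks f x = pds ks' f x"
proof (induction ks arbitrary: ks' x)
  case Nil then show ?case by simp
next
  case (Cons k ks)
  have "k \<in> set ks'" using Cons.prems(2) by (metis list.set_intros(1) set_mset_mset)
  then obtain xs ys where ks': "ks' = xs @ k # ys" by (meson split_list)
  have m: "mset ks = mset (xs @ ys)" using Cons.prems(2) ks' by simp
  have "pds (k # ks) f x = pd k (pds (xs @ ys) f) x"
    unfolding pds.simps by (rule pd_cong[OF U]) (use Cons.IH[OF Cons.prems(1) m] Cons.prems in auto)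
  also have "\<dots> = pds ks' f x" using pds_tofront[OF Cons.prems(1,3), of xs k ys] ks' by simp
  finally show ?case .
qed

end




fun merge :: "bool list \<Rightarrow> 'a list \<Rightarrow> 'a list \<Rightarrow> 'a list" where
  "merge [] us vs = []"
| "merge (c # cs) us vs = (if c then hd us # merge cs (tl us) vs else hd vs # merge cs us (tl vs))"

definition cnt :: "bool list \<Rightarrow> nat" where "cnt cs = length (filter id cs)"

lemma cnt_simps[simp]: "cnt [] = 0" "cnt (True # cs) = Suc (cnt cs)" "cnt (False # cs) = cnt cs"
  by (simp_all add: cnt_def)

lemma cnt_le: "cnt cs \<le> length cs"
  by (simp add: cnt_def)

lemma sel_len: "length ks = length cs \<Longrightarrow> length (sel cs ks) = cnt cs"
  by (induction cs arbitrary: ks) (auto simp: length_Suc_conv cnt_def)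

lemma nsel_len: "length ks = length cs \<Longrightarrow> length (sel (map Not cs) ks) = length cs - cnt cs"
proof (induction cs arbitrary: ks)
  case Nil then show ?case by simp
next
  case (Cons c cs)
  then obtain k ks' where "ks = k # ks'" "length ks' = length cs" by (cases ks) auto
  then show ?case using Cons.IH cnt_le[of cs] by (cases c) (auto simp: Suc_diff_le)
qed

lemma merge_len: "length (merge cs us vs) = length cs"
  by (induction cs arbitrary: us vs) auto

lemma sel_merge: "length us = cnt cs \<Longrightarrow> length vs = length cs - cnt cs \<Longrightarrow> sel cs (merge cs us vs) = us"
proof (induction cs arbitrary: us vs)
  case Nil then show ?case by simp
next
  case (Cons c cs)
  show ?case
  proof (cases c)
    case True
    then obtain u us' where "us = u # us'" using Cons.prems by (cases us) auto
    then show ?thesis using Cons True by auto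
  next
    case False
    then obtain v vs' where "vs = v # vs'" using Cons.prems cnt_le[of cs] by (cases vs) auto
    then show ?thesis using Cons False by auto
  qed
qed

lemma nsel_merge: "length us = cnt cs \<Longrightarrow> length vs = length cs - cnt cs \<Longrightarrow> sel (map Not cs) (merge cs us vs) = vs"
proof (induction cs arbitrary: us vs)
  case Nil then show ?case by simp
next
  case (Cons c cs)
  show ?case
  proof (cases c)
    case True
    then obtain u us' where "us = u # us'" using Cons.prems by (cases us) auto
    then show ?thesis using Cons True by auto
  next
    case False
    then obtain v vs' where "vs = v # vs'" using Cons.prems cnt_le[of cs] by (cases vs) auto
    then show ?thesis using Cons False cnt_le[of cs] by auto
  qed
qed

lemma merge_sel: "length ks = length cs \<Longrightarrow> merge cs (sel cs ks) (sel (map Not cs) ks) = ks"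
proof (induction cs arbitrary: ks)
  case Nil then show ?case by simp
next
  case (Cons c cs)
  then obtain k ks' where "ks = k # ks'" "length ks' = length cs" by (cases ks) auto
  then show ?case using Cons.IH by (cases c) auto
qed

lemma mset_merge: "length us = cnt cs \<Longrightarrow> length vs = length cs - cnt cs \<Longrightarrow>
  mset (merge cs us vs) = mset us + mset vs"
proof (induction cs arbitrary: us vs)
  case Nil then show ?case by simp
next
  case (Cons c cs)
  show ?case
  proof (cases c)
    case True
    then obtain u us' where "us = u # us'" using Cons.prems by (cases us) auto
    then show ?thesis using Cons True by auto
  next
    case False
    then obtain v vs' where "vs = v # vs'" using Cons.prems cnt_le[of cs] by (cases vs) auto
    then show ?thesis using Cons False cnt_le[of cs] by auto
  qed
qed

fun thp :: "real^'n^'n \<Rightarrow> 'n list \<Rightarrow> 'n list \<Rightarrow> real" where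
  "thp \<theta> (k # ks) (j # js) = \<theta> $ k $ j * thp \<theta> ks js"
| "thp \<theta> _ _ = 1"

lemma prod_thp: "length ks = N \<Longrightarrow> length js = N \<Longrightarrow> (\<Prod>r<N. \<theta> $ (ks ! r) $ (js ! r)) = thp \<theta> ks js"
proof (induction N arbitrary: ks js)
  case 0 then show ?case by simp
next
  case (Suc N)
  then obtain k ks' j js' where "ks = k # ks'" "js = j # js'" by (cases ks; cases js) auto
  then show ?case using Suc by (simp add: prod.lessThan_Suc_shift del: prod.lessThan_Suc)
qed

lemma thp_merge: "length us = cnt cs \<Longrightarrow> length vs = length cs - cnt cs \<Longrightarrow>
  length ws = cnt cs \<Longrightarrow> length zs = length cs - cnt cs \<Longrightarrow>
  thp \<theta> (merge cs us vs) (merge cs ws zs) = thp \<theta> us ws * thp \<theta> vs zs"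
proof (induction cs arbitrary: us vs ws zs)
  case Nil then show ?case by simp
next
  case (Cons c cs)
  show ?case
  proof (cases c)
    case True
    then obtain u us' w ws' where "us = u # us'" "ws = w # ws'" using Cons.prems by (cases us; cases ws) auto
    then show ?thesis using Cons True by auto
  next
    case False
    then obtain v vs' z zs' where "vs = v # vs'" "zs = z # zs'"
      using Cons.prems cnt_le[of cs] by (cases vs; cases zs) auto
    then show ?thesis using Cons False cnt_le[of cs] by auto
  qed
qed

lemma sum_BL_cnt: "(\<Sum>cs\<in>BL M. \<phi> (cnt cs)) = (\<Sum>s\<le>M. of_nat (M choose s) * (\<phi> s :: real))"
proof (induction M arbitrary: \<phi>)
  case 0 then show ?case by (simp add: BL_0)
next
  case (Suc M)
  have "(\<Sum>cs\<in>BL (Suc M). \<phi> (cnt cs)) = (\<Sum>cs\<in>BL M. \<phi> (Suc (cnt cs))) + (\<Sum>cs\<in>BL M. \<phi> (cnt cs))"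
    by (simp add: sum_BL_Suc)
  also have "\<dots> = (\<Sum>s\<le>M. of_nat (M choose s) * \<phi> (Suc s)) + (\<Sum>s\<le>M. of_nat (M choose s) * \<phi> s)"
    using Suc.IH[of "\<lambda>s. \<phi> (Suc s)"] Suc.IH[of \<phi>] by simp
  also have "(\<Sum>s\<le>M. of_nat (M choose s) * \<phi> s) = (\<Sum>s\<le>Suc M. of_nat (M choose s) * \<phi> s)"
    by simp
  also have "\<dots> = \<phi> 0 + (\<Sum>s\<le>M. of_nat (M choose Suc s) * \<phi> (Suc s))"
    by (subst sum.atMost_Suc_shift) simp
  finally have "(\<Sum>cs\<in>BL (Suc M). \<phi> (cnt cs)) =
     \<phi> 0 + (\<Sum>s\<le>M. (of_nat (M choose s) + of_nat (M choose Suc s)) * \<phi> (Suc s))"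
    by (simp add: algebra_simps sum.distrib)
  also have "\<dots> = (\<Sum>s\<le>Suc M. of_nat (Suc M choose s) * \<phi> s)"
    by (subst sum.atMost_Suc_shift) (simp add: algebra_simps)
  finally show ?case .
qed

definition T3 :: "nat \<Rightarrow> (nat \<times> nat \<times> nat) set" where
  "T3 k = {(p, q, N). p + q + N = k}"

lemma finite_T3[simp]: "finite (T3 k)"
proof -
  have "T3 k \<subseteq> {..k} \<times> {..k} \<times> {..k}" by (auto simp: T3_def)
  then show ?thesis by (rule finite_subset) auto
qed

lemma sum_T3: "(\<Sum>p\<le>k. \<Sum>q\<le>k - p. F p q (k - p - q)) = (\<Sum>(p, q, N)\<in>T3 k. F p q N)"
proof -
  have "(\<Sum>p\<le>k. \<Sum>q\<le>k - p. F p q (k - p - q)) = (\<Sum>(p, q)\<in>Sigma {..k} (\<lambda>p. {..k - p}). F p q (k - p - q))"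
    by (rule sum.Sigma) auto
  also have "\<dots> = (\<Sum>(p, q, N)\<in>T3 k. F p q N)"
    by (rule sum.reindex_bij_witness[where i = "\<lambda>(p, q, N). (p, q)" and j = "\<lambda>(p, q). (p, q, k - p - q)"])
       (auto simp: T3_def)
  finally show ?thesis .
qed




definition L :: "nat \<Rightarrow> ('n::finite) list set" where "L N = {ks. length ks = N}"

lemma finite_L[simp]: "finite (L N :: ('n::finite) list set)"
  unfolding L_def using finite_lists_length_eq[of "UNIV::'n set" N] by simp

lemma L0: "L 0 = {[]}" by (auto simp: L_def)

definition BPf :: "real^'n^'n \<Rightarrow> nat \<Rightarrow> (real^'n::finite \<Rightarrow> real) \<Rightarrow> (real^'n \<Rightarrow> real) \<Rightarrow> real^'n \<Rightarrow> real" where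
  "BPf \<theta> N f g = (\<lambda>y. \<Sum>as\<in>L N. \<Sum>bs\<in>L N. thp \<theta> as bs * (pds as f y * pds bs g y))"

lemma BPf_apply: "BPf \<theta> N f g y = (\<Sum>as\<in>L N. \<Sum>bs\<in>L N. thp \<theta> as bs * (pds as f y * pds bs g y))"
  by (simp add: BPf_def)

definition Tm :: "real^'n^'n \<Rightarrow> (real^'n::finite \<Rightarrow> real) \<Rightarrow> (real^'n \<Rightarrow> real) \<Rightarrow> (real^'n \<Rightarrow> real) \<Rightarrow>
   nat \<Rightarrow> nat \<Rightarrow> nat \<Rightarrow> real^'n \<Rightarrow> real" where
  "Tm \<theta> f g h a b c x = (\<Sum>(xs, ys, us, ws, vs, zs) \<in> L a \<times> L a \<times> L b \<times> L b \<times> L c \<times> L c.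
      thp \<theta> xs ys * thp \<theta> us ws * thp \<theta> vs zs * (pds (xs @ us) f x * pds (ys @ vs) g x * pds (ws @ zs) h x))"


lemma inner_BPf: "(\<Sum>ks\<in>{ks. length ks = N}. \<Sum>js\<in>{js. length js = N}.
    (\<Prod>r<N. \<theta> $ (ks ! r) $ (js ! r)) * pds ks f x * pds js g x) = BPf \<theta> N f g x"
  by (auto simp: BPf_apply L_def prod_thp mult.assoc intro!: sum.cong)

lemma mstar_T: "mstar \<theta> a b k x = (\<Sum>i\<in>T3 k. (1 / fact (snd (snd i))) * BPf \<theta> (snd (snd i)) (a (fst i)) (b (fst (snd i))) x)"
proof -
  have "mstar \<theta> a b k x = (\<Sum>p\<le>k. \<Sum>q\<le>k - p. (1 / fact (k - p - q)) * BPf \<theta> (k - p - q) (a p) (b q) x)"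
    unfolding mstar_def by (simp add: inner_BPf)
  also have "\<dots> = (\<Sum>(p, q, N)\<in>T3 k. (1 / fact N) * BPf \<theta> N (a p) (b q) x)"
    by (rule sum_T3)
  also have "\<dots> = (\<Sum>i\<in>T3 k. (1 / fact (snd (snd i))) * BPf \<theta> (snd (snd i)) (a (fst i)) (b (fst (snd i))) x)"
    by (simp add: split_def)
  finally show ?thesis .
qed

definition T4 :: "nat \<Rightarrow> (nat \<times> nat \<times> nat \<times> nat) set" where
  "T4 k = {(p, q, r, K). p + q + r + K = k}"

lemma finite_T4[simp]: "finite (T4 k)"
proof -
  have "T4 k \<subseteq> {..k} \<times> {..k} \<times> {..k} \<times> {..k}" by (auto simp: T4_def)
  then show ?thesis by (rule finite_subset) auto
qed

lemma regroupL: "(\<Sum>i\<in>T3 k. \<Sum>j\<in>T3 (fst i). F (fst j) (fst (snd j)) (fst (snd i)) (snd (snd j)) (snd (snd i))) =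
   (\<Sum>z\<in>T4 k. \<Sum>N\<le>snd (snd (snd z)). F (fst z) (fst (snd z)) (fst (snd (snd z))) N (snd (snd (snd z)) - N))"
proof -
  have "(\<Sum>i\<in>T3 k. \<Sum>j\<in>T3 (fst i). F (fst j) (fst (snd j)) (fst (snd i)) (snd (snd j)) (snd (snd i))) =
        (\<Sum>(i, j)\<in>Sigma (T3 k) (\<lambda>i. T3 (fst i)). F (fst j) (fst (snd j)) (fst (snd i)) (snd (snd j)) (snd (snd i)))"
    by (rule sum.Sigma) auto
  also have "\<dots> = (\<Sum>(z, N)\<in>Sigma (T4 k) (\<lambda>z. {..snd (snd (snd z))}). F (fst z) (fst (snd z)) (fst (snd (snd z))) N (snd (snd (snd z)) - N))"
    by (rule sum.reindex_bij_witness[where j = "\<lambda>((p', r, M), (p, q, N)). ((p, q, r, N + M), N)"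
          and i = "\<lambda>((p, q, r, K), N). ((p + q + N, r, K - N), (p, q, N))"])
       (auto simp: T3_def T4_def)
  also have "\<dots> = (\<Sum>z\<in>T4 k. \<Sum>N\<le>snd (snd (snd z)). F (fst z) (fst (snd z)) (fst (snd (snd z))) N (snd (snd (snd z)) - N))"
    by (rule sum.Sigma[symmetric]) auto
  finally show ?thesis .
qed

lemma regroupR: "(\<Sum>i\<in>T3 k. \<Sum>j\<in>T3 (fst (snd i)). F (fst i) (fst j) (fst (snd j)) (snd (snd j)) (snd (snd i))) =
   (\<Sum>z\<in>T4 k. \<Sum>N\<le>snd (snd (snd z)). F (fst z) (fst (snd z)) (fst (snd (snd z))) N (snd (snd (snd z)) - N))"
proof -
  have "(\<Sum>i\<in>T3 k. \<Sum>j\<in>T3 (fst (snd i)). F (fst i) (fst j) (fst (snd j)) (snd (snd j)) (snd (snd i))) =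
        (\<Sum>(i, j)\<in>Sigma (T3 k) (\<lambda>i. T3 (fst (snd i))). F (fst i) (fst j) (fst (snd j)) (snd (snd j)) (snd (snd i)))"
    by (rule sum.Sigma) auto
  also have "\<dots> = (\<Sum>(z, N)\<in>Sigma (T4 k) (\<lambda>z. {..snd (snd (snd z))}). F (fst z) (fst (snd z)) (fst (snd (snd z))) N (snd (snd (snd z)) - N))"
    by (rule sum.reindex_bij_witness[where j = "\<lambda>((p, q', M), (q, r, N)). ((p, q, r, N + M), N)"
          and i = "\<lambda>((p, q, r, K), N). ((p, q + r + N, K - N), (q, r, N))"])
       (auto simp: T3_def T4_def)
  also have "\<dots> = (\<Sum>z\<in>T4 k. \<Sum>N\<le>snd (snd (snd z)). F (fst z) (fst (snd z)) (fst (snd (snd z))) N (snd (snd (snd z)) - N))"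
    by (rule sum.Sigma[symmetric]) auto
  finally show ?thesis .
qed


lemma BPf_constL: "BPf \<theta> N (\<lambda>y. c) g x = (if N = 0 then c * g x else 0)"
proof (cases N)
  case 0
  then show ?thesis by (simp add: BPf_apply L0)
next
  case (Suc n)
  then show ?thesis unfolding BPf_apply by (auto intro!: sum.neutral simp: pds_const L_def)
qed

lemma BPf_constR: "BPf \<theta> N g (\<lambda>y. c) x = (if N = 0 then g x * c else 0)"
proof (cases N)
  case 0
  then show ?thesis by (simp add: BPf_apply L0)
next
  case (Suc n)
  then show ?thesis unfolding BPf_apply by (auto intro!: sum.neutral simp: pds_const L_def)
qed

lemma mstar_oneL: "mstar \<theta> mone a k x = a k x"
proof -
  have "mstar \<theta> mone a k x = (\<Sum>j\<in>T3 k. if j = (0, k, 0) then a k x else 0)"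
    unfolding mstar_T
  proof (rule sum.cong[OF refl])
    fix j assume "j \<in> T3 k"
    then show "1 / fact (snd (snd j)) * BPf \<theta> (snd (snd j)) (mone (fst j)) (a (fst (snd j))) x =
      (if j = (0, k, 0) then a k x else 0)"
      by (cases j) (auto simp: mone_def BPf_constL T3_def)
  qed
  also have "\<dots> = a k x" by (subst sum.delta[OF finite_T3]) (simp add: T3_def)
  finally show ?thesis .
qed

lemma mstar_oneR: "mstar \<theta> a mone k x = a k x"
proof -
  have "mstar \<theta> a mone k x = (\<Sum>j\<in>T3 k. if j = (k, 0, 0) then a k x else 0)"
    unfolding mstar_T
  proof (rule sum.cong[OF refl])
    fix j assume "j \<in> T3 k"
    then show "1 / fact (snd (snd j)) * BPf \<theta> (snd (snd j)) (a (fst j)) (mone (fst (snd j))) x =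
      (if j = (k, 0, 0) then a k x else 0)"
      by (cases j) (auto simp: mone_def BPf_constR T3_def)
  qed
  also have "\<dots> = a k x" by (subst sum.delta[OF finite_T3]) (simp add: T3_def)
  finally show ?thesis .
qed

context
  fixes U :: "(real^'n::finite) set"
  assumes U: "open U"
begin

lemma smooth_BPf: "smooth_on U f \<Longrightarrow> smooth_on U g \<Longrightarrow> smooth_on U (BPf \<theta> N f g)"
  unfolding BPf_def
  by (intro smooth_sum[OF U] finite_L smooth_cmult[OF U] smooth_mult[OF U] smooth_pds[OF U])

lemma pds_BPf: "smooth_on U f \<Longrightarrow> smooth_on U g \<Longrightarrow> x \<in> U \<Longrightarrow>
  pds ks (BPf \<theta> N f g) x = (\<Sum>as\<in>L N. \<Sum>bs\<in>L N. thp \<theta> as bs *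
     (\<Sum>cs\<in>BL (length ks). pds (sel cs ks @ as) f x * pds (sel (map Not cs) ks @ bs) g x))"
proof -
  assume f: "smooth_on U f" and g: "smooth_on U g" and x: "x \<in> U"
  have sm: "\<And>as bs. smooth_on U (\<lambda>y. pds as f y * pds bs g y)"
    using smooth_mult[OF U smooth_pds[OF U f] smooth_pds[OF U g]] .
  have "pds ks (BPf \<theta> N f g) x = (\<Sum>as\<in>L N. pds ks (\<lambda>y. \<Sum>bs\<in>L N. thp \<theta> as bs * (pds as f y * pds bs g y)) x)"
    unfolding BPf_def
    by (rule pds_sum[OF U finite_L _ x]) (intro smooth_sum[OF U] finite_L smooth_cmult[OF U] sm)
  also have "\<dots> = (\<Sum>as\<in>L N. \<Sum>bs\<in>L N. pds ks (\<lambda>y. thp \<theta> as bs * (pds as f y * pds bs g y)) x)"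
    by (intro sum.cong refl pds_sum[OF U finite_L _ x] smooth_cmult[OF U] sm)
  also have "\<dots> = (\<Sum>as\<in>L N. \<Sum>bs\<in>L N. thp \<theta> as bs * pds ks (\<lambda>y. pds as f y * pds bs g y) x)"
    by (intro sum.cong refl pds_cmult[OF U sm x])
  also have "\<dots> = (\<Sum>as\<in>L N. \<Sum>bs\<in>L N. thp \<theta> as bs *
     (\<Sum>cs\<in>BL (length ks). pds (sel cs ks @ as) f x * pds (sel (map Not cs) ks @ bs) g x))"
    by (intro sum.cong refl arg_cong2[where f="(*)"])
       (simp add: pds_mult[OF U smooth_pds[OF U f] smooth_pds[OF U g] x] pds_append)
  finally show ?thesis .
qed



lemma cnt_map_Not[simp]: "cnt (map Not cs) = length cs - cnt cs"
  by (induction cs) (auto simp: cnt_def Suc_diff_le)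

lemma thp_split: "length ks = length cs \<Longrightarrow> length js = length cs \<Longrightarrow>
  thp \<theta> ks js = thp \<theta> (sel cs ks) (sel cs js) * thp \<theta> (sel (map Not cs) ks) (sel (map Not cs) js)"
  using thp_merge[of "sel cs ks" cs "sel (map Not cs) ks" "sel cs js" "sel (map Not cs) js" \<theta>]
  by (simp add: sel_len nsel_len merge_sel)

lemma mset_split: "length js = length cs \<Longrightarrow> mset js = mset (sel cs js) + mset (sel (map Not cs) js)"
  using mset_merge[of "sel cs js" cs "sel (map Not cs) js"] by (simp add: sel_len nsel_len merge_sel)

lemma BPf_L:
  assumes f: "smooth_on U f" and g: "smooth_on U g" and h: "smooth_on U h" and x: "x \<in> U"
  shows "BPf \<theta> M (BPf \<theta> N f g) h x = (\<Sum>cs\<in>BL M. Tm \<theta> f g h N (cnt cs) (M - cnt cs) x)"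
proof -
  define P where "P ks js as bs cs = thp \<theta> ks js * thp \<theta> as bs * pds (sel cs ks @ as) f x *
     pds (sel (map Not cs) ks @ bs) g x * pds js h x" for ks js as bs cs
  define H where "H (cs::bool list) t = (case t of (xs, ys, us, ws, vs, zs) \<Rightarrow>
      thp \<theta> xs ys * thp \<theta> us ws * thp \<theta> vs zs * (pds (xs @ us) f x * pds (ys @ vs) g x * pds (ws @ zs) h x))" for cs t
  have "BPf \<theta> M (BPf \<theta> N f g) h x = (\<Sum>ks\<in>L M. \<Sum>js\<in>L M. thp \<theta> ks js * (pds ks (BPf \<theta> N f g) x * pds js h x))"
    by (simp add: BPf_apply)
  also have "\<dots> = (\<Sum>ks\<in>L M. \<Sum>js\<in>L M. thp \<theta> ks js * ((\<Sum>as\<in>L N. \<Sum>bs\<in>L N. thp \<theta> as bs *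
     (\<Sum>cs\<in>BL M. pds (sel cs ks @ as) f x * pds (sel (map Not cs) ks @ bs) g x)) * pds js h x))"
    by (intro sum.cong refl) (simp add: pds_BPf[OF f g x] L_def)
  also have "\<dots> = (\<Sum>ks\<in>L M. \<Sum>js\<in>L M. \<Sum>as\<in>L N. \<Sum>bs\<in>L N. \<Sum>cs\<in>BL M. P ks js as bs cs)"
    by (simp add: P_def sum_distrib_left sum_distrib_right mult_ac)
  also have "\<dots> = (\<Sum>(ks, js, as, bs, cs) \<in> L M \<times> L M \<times> L N \<times> L N \<times> BL M. P ks js as bs cs)"
    by (simp add: sum.cartesian_product)
  also have "\<dots> = (\<Sum>(cs, t) \<in> Sigma (BL M) (\<lambda>cs. L N \<times> L N \<times> L (cnt cs) \<times> L (cnt cs) \<times> L (M - cnt cs) \<times> L (M - cnt cs)). H cs t)"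
  proof (rule sum.reindex_bij_witness[where
        j = "\<lambda>(ks, js, as, bs, cs). (cs, (as, bs, sel cs ks, sel cs js, sel (map Not cs) ks, sel (map Not cs) js))"
        and i = "\<lambda>(cs, (xs, ys, us, ws, vs, zs)). (merge cs us vs, merge cs ws zs, xs, ys, cs)"])
    fix a :: "'n list \<times> 'n list \<times> 'n list \<times> 'n list \<times> bool list"
    assume "a \<in> L M \<times> L M \<times> L N \<times> L N \<times> BL M"
    then obtain ks js as bs :: "'n list" and cs :: "bool list" where a: "a = (ks, js, as, bs, cs)" "length ks = M" "length js = M"
      "length as = N" "length bs = N" "length cs = M"
      by (auto simp: L_def BL_def)
    show "(case case a of (ks, js, as, bs, cs) \<Rightarrow> (cs, as, bs, sel cs ks, sel cs js, sel (map Not cs) ks, sel (map Not cs) js) of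
          (cs, xs, ys, us, ws, vs, zs) \<Rightarrow> (merge cs us vs, merge cs ws zs, xs, ys, cs)) = a"
      using a by (simp add: merge_sel)
    show "(case a of (ks, js, as, bs, cs) \<Rightarrow> (cs, as, bs, sel cs ks, sel cs js, sel (map Not cs) ks, sel (map Not cs) js))
          \<in> Sigma (BL M) (\<lambda>cs. L N \<times> L N \<times> L (cnt cs) \<times> L (cnt cs) \<times> L (M - cnt cs) \<times> L (M - cnt cs))"
      using a by (simp add: L_def BL_def sel_len nsel_len)
    have t: "thp \<theta> ks js = thp \<theta> (sel cs ks) (sel cs js) * thp \<theta> (sel (map Not cs) ks) (sel (map Not cs) js)"
      using a by (simp add: thp_split)
    have p1: "pds (as @ sel cs ks) f x = pds (sel cs ks @ as) f x"
      by (rule pds_perm[OF U f _ x]) simp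
    have p2: "pds (bs @ sel (map Not cs) ks) g x = pds (sel (map Not cs) ks @ bs) g x"
      by (rule pds_perm[OF U g _ x]) simp
    have p3: "pds (sel cs js @ sel (map Not cs) js) h x = pds js h x"
      by (rule pds_perm[OF U h _ x]) (use a in \<open>simp add: mset_split[symmetric]\<close>)
    show "(case case a of (ks, js, as, bs, cs) \<Rightarrow> (cs, as, bs, sel cs ks, sel cs js, sel (map Not cs) ks, sel (map Not cs) js) of
          (cs, t) \<Rightarrow> H cs t) = (case a of (ks, js, as, bs, cs) \<Rightarrow> P ks js as bs cs)"
      using a by (simp add: H_def P_def t p1 p2 p3 mult_ac)
  next
    fix b :: "bool list \<times> 'n list \<times> 'n list \<times> 'n list \<times> 'n list \<times> 'n list \<times> 'n list"
    assume "b \<in> Sigma (BL M) (\<lambda>cs. L N \<times> L N \<times> L (cnt cs) \<times> L (cnt cs) \<times> L (M - cnt cs) \<times> L (M - cnt cs))"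
    then obtain cs :: "bool list" and xs ys us ws vs zs :: "'n list" where b: "b = (cs, xs, ys, us, ws, vs, zs)" "length cs = M"
      "length xs = N" "length ys = N" "length us = cnt cs" "length ws = cnt cs"
      "length vs = M - cnt cs" "length zs = M - cnt cs"
      by (auto simp: L_def BL_def)
    show "(case case b of (cs, xs, ys, us, ws, vs, zs) \<Rightarrow> (merge cs us vs, merge cs ws zs, xs, ys, cs) of
         (ks, js, as, bs, cs) \<Rightarrow> (cs, as, bs, sel cs ks, sel cs js, sel (map Not cs) ks, sel (map Not cs) js)) = b"
      using b by (simp add: sel_merge nsel_merge)
    show "(case b of (cs, xs, ys, us, ws, vs, zs) \<Rightarrow> (merge cs us vs, merge cs ws zs, xs, ys, cs))
         \<in> L M \<times> L M \<times> L N \<times> L N \<times> BL M"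
      using b by (simp add: L_def BL_def merge_len)
  qed
  also have "\<dots> = (\<Sum>cs\<in>BL M. \<Sum>t \<in> L N \<times> L N \<times> L (cnt cs) \<times> L (cnt cs) \<times> L (M - cnt cs) \<times> L (M - cnt cs). H cs t)"
    by (rule sum.Sigma[symmetric]) auto
  also have "\<dots> = (\<Sum>cs\<in>BL M. Tm \<theta> f g h N (cnt cs) (M - cnt cs) x)"
    by (simp add: Tm_def H_def)
  finally show ?thesis .
qed


lemma BPf_R:
  assumes f: "smooth_on U f" and g: "smooth_on U g" and h: "smooth_on U h" and x: "x \<in> U"
  shows "BPf \<theta> M f (BPf \<theta> N g h) x = (\<Sum>cs\<in>BL M. Tm \<theta> f g h (cnt cs) (M - cnt cs) N x)"
proof -
  define P where "P ks js as bs cs = thp \<theta> ks js * thp \<theta> as bs * pds ks f x *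
     pds (sel cs js @ as) g x * pds (sel (map Not cs) js @ bs) h x" for ks js as bs cs
  define H where "H (cs::bool list) t = (case t of (xs, ys, us, ws, vs, zs) \<Rightarrow>
      thp \<theta> xs ys * thp \<theta> us ws * thp \<theta> vs zs * (pds (xs @ us) f x * pds (ys @ vs) g x * pds (ws @ zs) h x))" for cs t
  have "BPf \<theta> M f (BPf \<theta> N g h) x = (\<Sum>ks\<in>L M. \<Sum>js\<in>L M. thp \<theta> ks js * (pds ks f x * pds js (BPf \<theta> N g h) x))"
    by (simp add: BPf_apply)
  also have "\<dots> = (\<Sum>ks\<in>L M. \<Sum>js\<in>L M. thp \<theta> ks js * (pds ks f x * (\<Sum>as\<in>L N. \<Sum>bs\<in>L N. thp \<theta> as bs *
     (\<Sum>cs\<in>BL M. pds (sel cs js @ as) g x * pds (sel (map Not cs) js @ bs) h x))))"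
    by (intro sum.cong refl) (simp add: pds_BPf[OF g h x] L_def)
  also have "\<dots> = (\<Sum>ks\<in>L M. \<Sum>js\<in>L M. \<Sum>as\<in>L N. \<Sum>bs\<in>L N. \<Sum>cs\<in>BL M. P ks js as bs cs)"
    by (simp add: P_def sum_distrib_left sum_distrib_right mult_ac)
  also have "\<dots> = (\<Sum>(ks, js, as, bs, cs) \<in> L M \<times> L M \<times> L N \<times> L N \<times> BL M. P ks js as bs cs)"
    by (simp add: sum.cartesian_product)
  also have "\<dots> = (\<Sum>(cs, t) \<in> Sigma (BL M) (\<lambda>cs. L (cnt cs) \<times> L (cnt cs) \<times> L (M - cnt cs) \<times> L (M - cnt cs) \<times> L N \<times> L N). H cs t)"
  proof (rule sum.reindex_bij_witness[where
        j = "\<lambda>(ks, js, as, bs, cs). (cs, (sel cs ks, sel cs js, sel (map Not cs) ks, sel (map Not cs) js, as, bs))"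
        and i = "\<lambda>(cs, (xs, ys, us, ws, vs, zs)). (merge cs xs us, merge cs ys ws, vs, zs, cs)"])
    fix a :: "'n list \<times> 'n list \<times> 'n list \<times> 'n list \<times> bool list"
    assume "a \<in> L M \<times> L M \<times> L N \<times> L N \<times> BL M"
    then obtain ks js as bs :: "'n list" and cs :: "bool list" where a: "a = (ks, js, as, bs, cs)" "length ks = M" "length js = M"
      "length as = N" "length bs = N" "length cs = M"
      by (auto simp: L_def BL_def)
    show "(case case a of (ks, js, as, bs, cs) \<Rightarrow> (cs, sel cs ks, sel cs js, sel (map Not cs) ks, sel (map Not cs) js, as, bs) of
          (cs, xs, ys, us, ws, vs, zs) \<Rightarrow> (merge cs xs us, merge cs ys ws, vs, zs, cs)) = a"
      using a by (simp add: merge_sel)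
    show "(case a of (ks, js, as, bs, cs) \<Rightarrow> (cs, sel cs ks, sel cs js, sel (map Not cs) ks, sel (map Not cs) js, as, bs))
          \<in> Sigma (BL M) (\<lambda>cs. L (cnt cs) \<times> L (cnt cs) \<times> L (M - cnt cs) \<times> L (M - cnt cs) \<times> L N \<times> L N)"
      using a by (simp add: L_def BL_def sel_len nsel_len)
    have t: "thp \<theta> ks js = thp \<theta> (sel cs ks) (sel cs js) * thp \<theta> (sel (map Not cs) ks) (sel (map Not cs) js)"
      using a by (simp add: thp_split)
    have p1: "pds (sel cs ks @ sel (map Not cs) ks) f x = pds ks f x"
      by (rule pds_perm[OF U f _ x]) (use a in \<open>simp add: mset_split[symmetric]\<close>)
    show "(case case a of (ks, js, as, bs, cs) \<Rightarrow> (cs, sel cs ks, sel cs js, sel (map Not cs) ks, sel (map Not cs) js, as, bs) of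
          (cs, t) \<Rightarrow> H cs t) = (case a of (ks, js, as, bs, cs) \<Rightarrow> P ks js as bs cs)"
      using a by (simp add: H_def P_def t p1 mult_ac)
  next
    fix b :: "bool list \<times> 'n list \<times> 'n list \<times> 'n list \<times> 'n list \<times> 'n list \<times> 'n list"
    assume "b \<in> Sigma (BL M) (\<lambda>cs. L (cnt cs) \<times> L (cnt cs) \<times> L (M - cnt cs) \<times> L (M - cnt cs) \<times> L N \<times> L N)"
    then obtain cs :: "bool list" and xs ys us ws vs zs :: "'n list" where b: "b = (cs, xs, ys, us, ws, vs, zs)" "length cs = M"
      "length xs = cnt cs" "length ys = cnt cs" "length us = M - cnt cs" "length ws = M - cnt cs"
      "length vs = N" "length zs = N"
      by (auto simp: L_def BL_def)
    show "(case case b of (cs, xs, ys, us, ws, vs, zs) \<Rightarrow> (merge cs xs us, merge cs ys ws, vs, zs, cs) of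
         (ks, js, as, bs, cs) \<Rightarrow> (cs, sel cs ks, sel cs js, sel (map Not cs) ks, sel (map Not cs) js, as, bs)) = b"
      using b by (simp add: sel_merge nsel_merge)
    show "(case b of (cs, xs, ys, us, ws, vs, zs) \<Rightarrow> (merge cs xs us, merge cs ys ws, vs, zs, cs))
         \<in> L M \<times> L M \<times> L N \<times> L N \<times> BL M"
      using b by (simp add: L_def BL_def merge_len)
  qed
  also have "\<dots> = (\<Sum>cs\<in>BL M. \<Sum>t \<in> L (cnt cs) \<times> L (cnt cs) \<times> L (M - cnt cs) \<times> L (M - cnt cs) \<times> L N \<times> L N. H cs t)"
    by (rule sum.Sigma[symmetric]) auto
  also have "\<dots> = (\<Sum>cs\<in>BL M. Tm \<theta> f g h (cnt cs) (M - cnt cs) N x)"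
    by (simp add: Tm_def H_def)
  finally show ?thesis .
qed

lemma core_assoc:
  assumes f: "smooth_on U f" and g: "smooth_on U g" and h: "smooth_on U h" and x: "x \<in> U"
  shows "(\<Sum>N\<le>K. BPf \<theta> (K - N) (BPf \<theta> N f g) h x / (fact N * fact (K - N))) =
         (\<Sum>N\<le>K. BPf \<theta> (K - N) f (BPf \<theta> N g h) x / (fact N * fact (K - N)))"
proof -
  define W where "W a b c = Tm \<theta> f g h a b c x / (fact a * fact b * fact c)" for a b c
  have bin: "of_nat (M choose s) / (fact N * fact M) = 1 / (fact N * fact s * fact (M - s) :: real)"
    if "s \<le> M" for M N s :: nat
    using that by (simp add: binomial_fact field_simps)
  have "(\<Sum>N\<le>K. BPf \<theta> (K - N) (BPf \<theta> N f g) h x / (fact N * fact (K - N))) =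
        (\<Sum>N\<le>K. \<Sum>s\<le>K - N. W N s (K - N - s))"
  proof (rule sum.cong[OF refl])
    fix N assume "N \<in> {..K}"
    have "BPf \<theta> (K - N) (BPf \<theta> N f g) h x / (fact N * fact (K - N)) =
       (\<Sum>s\<le>K - N. of_nat (K - N choose s) * Tm \<theta> f g h N s (K - N - s) x) / (fact N * fact (K - N))"
      using sum_BL_cnt[of "\<lambda>s. Tm \<theta> f g h N s (K - N - s) x" "K - N"] by (simp add: BPf_L[OF f g h x])
    also have "\<dots> = (\<Sum>s\<le>K - N. W N s (K - N - s))"
      unfolding sum_divide_distrib
    proof (rule sum.cong[OF refl])
      fix s assume "s \<in> {..K - N}"
      then have "s \<le> K - N" by simp
      then show "of_nat (K - N choose s) * Tm \<theta> f g h N s (K - N - s) x / (fact N * fact (K - N)) = W N s (K - N - s)"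
        using bin[of s "K - N" N] by (simp add: W_def field_simps)
    qed
    finally show "BPf \<theta> (K - N) (BPf \<theta> N f g) h x / (fact N * fact (K - N)) = (\<Sum>s\<le>K - N. W N s (K - N - s))" .
  qed
  also have "\<dots> = (\<Sum>(a, b, c)\<in>T3 K. W a b c)" by (rule sum_T3)
  finally have lhs: "(\<Sum>N\<le>K. BPf \<theta> (K - N) (BPf \<theta> N f g) h x / (fact N * fact (K - N))) = (\<Sum>(a, b, c)\<in>T3 K. W a b c)" .
  have "(\<Sum>N\<le>K. BPf \<theta> (K - N) f (BPf \<theta> N g h) x / (fact N * fact (K - N))) =
        (\<Sum>N\<le>K. \<Sum>s\<le>K - N. W s (K - N - s) N)"
  proof (rule sum.cong[OF refl])
    fix N assume "N \<in> {..K}"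
    have "BPf \<theta> (K - N) f (BPf \<theta> N g h) x / (fact N * fact (K - N)) =
       (\<Sum>s\<le>K - N. of_nat (K - N choose s) * Tm \<theta> f g h s (K - N - s) N x) / (fact N * fact (K - N))"
      using sum_BL_cnt[of "\<lambda>s. Tm \<theta> f g h s (K - N - s) N x" "K - N"] by (simp add: BPf_R[OF f g h x])
    also have "\<dots> = (\<Sum>s\<le>K - N. W s (K - N - s) N)"
      unfolding sum_divide_distrib
    proof (rule sum.cong[OF refl])
      fix s assume "s \<in> {..K - N}"
      then have "s \<le> K - N" by simp
      then show "of_nat (K - N choose s) * Tm \<theta> f g h s (K - N - s) N x / (fact N * fact (K - N)) = W s (K - N - s) N"
        using bin[of s "K - N" N] by (simp add: W_def field_simps)
    qed
    finally show "BPf \<theta> (K - N) f (BPf \<theta> N g h) x / (fact N * fact (K - N)) = (\<Sum>s\<le>K - N. W s (K - N - s) N)" .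
  qed
  also have "\<dots> = (\<Sum>(a, b, c)\<in>T3 K. W b c a)" by (rule sum_T3)
  also have "\<dots> = (\<Sum>(a, b, c)\<in>T3 K. W a b c)"
    by (rule sum.reindex_bij_witness[where i = "\<lambda>(a, b, c). (c, a, b)" and j = "\<lambda>(a, b, c). (b, c, a)"])
       (auto simp: T3_def)
  finally show ?thesis using lhs by simp
qed


lemma BPf_linL:
  assumes "finite S" "\<And>i. i \<in> S \<Longrightarrow> smooth_on U (u i)" "smooth_on U h" "x \<in> U"
  shows "BPf \<theta> M (\<lambda>y. \<Sum>i\<in>S. w i * u i y) h x = (\<Sum>i\<in>S. w i * BPf \<theta> M (u i) h x)"
proof -
  have "\<And>as. pds as (\<lambda>y. \<Sum>i\<in>S. w i * u i y) x = (\<Sum>i\<in>S. w i * pds as (u i) x)"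
    using assms by (simp add: pds_sum[OF U] smooth_cmult[OF U] pds_cmult[OF U])
  then show ?thesis
    by (simp add: BPf_apply sum_distrib_left sum_distrib_right mult_ac) (subst sum.swap, rule sum.cong, simp, subst sum.swap, simp)
qed

lemma BPf_linR:
  assumes "finite S" "\<And>i. i \<in> S \<Longrightarrow> smooth_on U (u i)" "smooth_on U h" "x \<in> U"
  shows "BPf \<theta> M h (\<lambda>y. \<Sum>i\<in>S. w i * u i y) x = (\<Sum>i\<in>S. w i * BPf \<theta> M h (u i) x)"
proof -
  have "\<And>as. pds as (\<lambda>y. \<Sum>i\<in>S. w i * u i y) x = (\<Sum>i\<in>S. w i * pds as (u i) x)"
    using assms by (simp add: pds_sum[OF U] smooth_cmult[OF U] pds_cmult[OF U])
  then show ?thesis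
    by (simp add: BPf_apply sum_distrib_left sum_distrib_right mult_ac) (subst sum.swap, rule sum.cong, simp, subst sum.swap, simp)
qed

lemma smooth_mstar: "moyal_elem U a \<Longrightarrow> moyal_elem U b \<Longrightarrow> moyal_elem U (mstar \<theta> a b)"
proof -
  assume a: "moyal_elem U a" and b: "moyal_elem U b"
  show ?thesis unfolding moyal_elem_def
  proof
    fix k
    have "mstar \<theta> a b k = (\<lambda>y. \<Sum>i\<in>T3 k. (1 / fact (snd (snd i))) * BPf \<theta> (snd (snd i)) (a (fst i)) (b (fst (snd i))) y)"
      by (rule ext) (rule mstar_T)
    moreover have "smooth_on U (\<lambda>y. \<Sum>i\<in>T3 k. (1 / fact (snd (snd i))) * BPf \<theta> (snd (snd i)) (a (fst i)) (b (fst (snd i))) y)"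
      using a b unfolding moyal_elem_def
      by (intro smooth_sum[OF U] finite_T3 smooth_cmult[OF U] smooth_BPf) auto
    ultimately show "smooth_on U (mstar \<theta> a b k)" by simp
  qed
qed

lemma mstar_assoc:
  assumes a: "moyal_elem U a" and b: "moyal_elem U b" and c: "moyal_elem U c" and x: "x \<in> U"
  shows "mstar \<theta> (mstar \<theta> a b) c k x = mstar \<theta> a (mstar \<theta> b c) k x"
proof -
  have sa: "\<And>p. smooth_on U (a p)" and sb: "\<And>p. smooth_on U (b p)" and sc: "\<And>p. smooth_on U (c p)"
    using a b c by (auto simp: moyal_elem_def)
  define G where "G p q r N M = (1 / fact M) * ((1 / fact N) * BPf \<theta> M (BPf \<theta> N (a p) (b q)) (c r) x)" for p q r N M
  define GR where "GR p q r N M = (1 / fact M) * ((1 / fact N) * BPf \<theta> M (a p) (BPf \<theta> N (b q) (c r)) x)" for p q r N M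
  have mab: "\<And>p'. mstar \<theta> a b p' = (\<lambda>y. \<Sum>j\<in>T3 p'. (1 / fact (snd (snd j))) * BPf \<theta> (snd (snd j)) (a (fst j)) (b (fst (snd j))) y)"
    by (simp add: mstar_T fun_eq_iff)
  have mbc: "\<And>q'. mstar \<theta> b c q' = (\<lambda>y. \<Sum>j\<in>T3 q'. (1 / fact (snd (snd j))) * BPf \<theta> (snd (snd j)) (b (fst j)) (c (fst (snd j))) y)"
    by (simp add: mstar_T fun_eq_iff)
  have "mstar \<theta> (mstar \<theta> a b) c k x =
     (\<Sum>i\<in>T3 k. \<Sum>j\<in>T3 (fst i). G (fst j) (fst (snd j)) (fst (snd i)) (snd (snd j)) (snd (snd i)))"
    unfolding mstar_T[of \<theta> "mstar \<theta> a b"] mab G_def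
  proof (intro sum.cong refl)
    fix i assume "i \<in> T3 k"
    show "1 / fact (snd (snd i)) * BPf \<theta> (snd (snd i)) (\<lambda>y. \<Sum>j\<in>T3 (fst i). 1 / fact (snd (snd j)) * BPf \<theta> (snd (snd j)) (a (fst j)) (b (fst (snd j))) y) (c (fst (snd i))) x =
      (\<Sum>j\<in>T3 (fst i). 1 / fact (snd (snd i)) * (1 / fact (snd (snd j)) * BPf \<theta> (snd (snd i)) (BPf \<theta> (snd (snd j)) (a (fst j)) (b (fst (snd j)))) (c (fst (snd i))) x))"
      by (subst BPf_linL[where S = "T3 (fst i)" and u = "\<lambda>j. BPf \<theta> (snd (snd j)) (a (fst j)) (b (fst (snd j)))"
          and w = "\<lambda>j. 1 / fact (snd (snd j))"])
         (auto simp: sa sb sc smooth_BPf x sum_distrib_left)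
  qed
  also have "\<dots> = (\<Sum>z\<in>T4 k. \<Sum>N\<le>snd (snd (snd z)). G (fst z) (fst (snd z)) (fst (snd (snd z))) N (snd (snd (snd z)) - N))"
    by (rule regroupL)
  also have "\<dots> = (\<Sum>z\<in>T4 k. \<Sum>N\<le>snd (snd (snd z)). GR (fst z) (fst (snd z)) (fst (snd (snd z))) N (snd (snd (snd z)) - N))"
  proof (rule sum.cong[OF refl])
    fix z
    show "(\<Sum>N\<le>snd (snd (snd z)). G (fst z) (fst (snd z)) (fst (snd (snd z))) N (snd (snd (snd z)) - N)) =
          (\<Sum>N\<le>snd (snd (snd z)). GR (fst z) (fst (snd z)) (fst (snd (snd z))) N (snd (snd (snd z)) - N))"
      using core_assoc[OF sa sb sc x, where K = "snd (snd (snd z))" and \<theta> = \<theta>]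
      by (simp add: G_def GR_def field_simps)
  qed
  also have "\<dots> = (\<Sum>i\<in>T3 k. \<Sum>j\<in>T3 (fst (snd i)). GR (fst i) (fst j) (fst (snd j)) (snd (snd j)) (snd (snd i)))"
    by (rule regroupR[symmetric])
  also have "\<dots> = mstar \<theta> a (mstar \<theta> b c) k x"
    unfolding mstar_T[of \<theta> a "mstar \<theta> b c"] mbc GR_def
  proof (intro sum.cong refl)
    fix i assume "i \<in> T3 k"
    show "(\<Sum>j\<in>T3 (fst (snd i)). 1 / fact (snd (snd i)) * (1 / fact (snd (snd j)) * BPf \<theta> (snd (snd i)) (a (fst i)) (BPf \<theta> (snd (snd j)) (b (fst j)) (c (fst (snd j)))) x)) =
      1 / fact (snd (snd i)) * BPf \<theta> (snd (snd i)) (a (fst i)) (\<lambda>y. \<Sum>j\<in>T3 (fst (snd i)). 1 / fact (snd (snd j)) * BPf \<theta> (snd (snd j)) (b (fst j)) (c (fst (snd j))) y) x"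
      by (subst BPf_linR[where S = "T3 (fst (snd i))" and u = "\<lambda>j. BPf \<theta> (snd (snd j)) (b (fst j)) (c (fst (snd j)))"
          and w = "\<lambda>j. 1 / fact (snd (snd j))"])
         (auto simp: sa sb sc smooth_BPf x sum_distrib_left)
  qed
  finally show ?thesis .
qed


lemma BPf_addL:
  assumes "smooth_on U f" "smooth_on U g" "smooth_on U h" "x \<in> U"
  shows "BPf \<theta> N (\<lambda>y. f y + g y) h x = BPf \<theta> N f h x + BPf \<theta> N g h x"
  using assms by (simp add: BPf_apply pds_add[OF U] distrib_left distrib_right sum.distrib)

lemma BPf_addR:
  assumes "smooth_on U f" "smooth_on U g" "smooth_on U h" "x \<in> U"
  shows "BPf \<theta> N h (\<lambda>y. f y + g y) x = BPf \<theta> N h f x + BPf \<theta> N h g x"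
  using assms by (simp add: BPf_apply pds_add[OF U] distrib_left distrib_right sum.distrib)

lemma mstar_addL:
  assumes a: "moyal_elem U a" and b: "moyal_elem U b" and c: "moyal_elem U c" and x: "x \<in> U"
  shows "mstar \<theta> (\<lambda>k y. a k y + b k y) c k x = mstar \<theta> a c k x + mstar \<theta> b c k x"
  using assms unfolding moyal_elem_def
  by (simp add: mstar_T BPf_addL distrib_left sum.distrib)

lemma mstar_addR:
  assumes a: "moyal_elem U a" and b: "moyal_elem U b" and c: "moyal_elem U c" and x: "x \<in> U"
  shows "mstar \<theta> c (\<lambda>k y. a k y + b k y) k x = mstar \<theta> c a k x + mstar \<theta> c b k x"
  using assms unfolding moyal_elem_def
  by (simp add: mstar_T BPf_addR distrib_left sum.distrib)

lemma pd_BPf: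
  assumes f: "smooth_on U f" and g: "smooth_on U g" and x: "x \<in> U"
  shows "pd i (BPf \<theta> N f g) x = BPf \<theta> N (pd i f) g x + BPf \<theta> N f (pd i g) x"
proof -
  have l: "\<And>as bs. ld (\<lambda>y. thp \<theta> as bs * (pds as f y * pds bs g y)) x i \<and>
      pd i (\<lambda>y. thp \<theta> as bs * (pds as f y * pds bs g y)) x =
      thp \<theta> as bs * (pds (i # as) f x * pds bs g x + pds as f x * pds (i # bs) g x)"
  proof -
    fix as bs
    have m: "ld (\<lambda>y. pds as f y * pds bs g y) x i \<and> pd i (\<lambda>y. pds as f y * pds bs g y) x =
        pd i (pds as f) x * pds bs g x + pds as f x * pd i (pds bs g) x"
      by (rule ld_mult) (use smooth_ld[OF U] f g x in blast)+
    show "?thesis as bs" using ld_cmult[OF m[THEN conjunct1], of "thp \<theta> as bs"] m by simp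
  qed
  have l2: "\<And>as. ld (\<lambda>y. \<Sum>bs\<in>L N. thp \<theta> as bs * (pds as f y * pds bs g y)) x i \<and>
      pd i (\<lambda>y. \<Sum>bs\<in>L N. thp \<theta> as bs * (pds as f y * pds bs g y)) x =
      (\<Sum>bs\<in>L N. thp \<theta> as bs * (pds (i # as) f x * pds bs g x + pds as f x * pds (i # bs) g x))"
  proof -
    fix as
    show "?thesis as"
      using ld_sum[OF finite_L, where u = "\<lambda>bs y. thp \<theta> as bs * (pds as f y * pds bs g y)" and x = x and i = i] l by simp
  qed
  have "pd i (BPf \<theta> N f g) x = (\<Sum>as\<in>L N. \<Sum>bs\<in>L N. thp \<theta> as bs * (pds (i # as) f x * pds bs g x + pds as f x * pds (i # bs) g x))"
    unfolding BPf_def using ld_sum[OF finite_L, where u = "\<lambda>as y. \<Sum>bs\<in>L N. thp \<theta> as bs * (pds as f y * pds bs g y)" and x = x and i = i] l2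
    by simp
  also have "\<dots> = BPf \<theta> N (pd i f) g x + BPf \<theta> N f (pd i g) x"
  proof -
    have "\<And>as. pds as (pd i f) x = pds (i # as) f x"
      using pds_perm[OF U f _ x, of "as @ [i]" "i # as" for as] by (simp add: pds_append)
    moreover have "\<And>bs. pds bs (pd i g) x = pds (i # bs) g x"
      using pds_perm[OF U g _ x, of "bs @ [i]" "i # bs" for bs] by (simp add: pds_append)
    ultimately show ?thesis by (simp add: BPf_apply distrib_left sum.distrib)
  qed
  finally show ?thesis .
qed

lemma mpd_mstar:
  assumes a: "moyal_elem U a" and b: "moyal_elem U b" and x: "x \<in> U"
  shows "pd i (mstar \<theta> a b k) x = mstar \<theta> (mpd i a) b k x + mstar \<theta> a (mpd i b) k x"
proof -
  have sa: "\<And>p. smooth_on U (a p)" and sb: "\<And>p. smooth_on U (b p)" using a b by (auto simp: moyal_elem_def)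
  have e: "mstar \<theta> a b k = (\<lambda>y. \<Sum>j\<in>T3 k. (1 / fact (snd (snd j))) * BPf \<theta> (snd (snd j)) (a (fst j)) (b (fst (snd j))) y)"
    by (rule ext) (rule mstar_T)
  have l: "\<And>j. ld (\<lambda>y. (1 / fact (snd (snd j))) * BPf \<theta> (snd (snd j)) (a (fst j)) (b (fst (snd j))) y) x i \<and>
     pd i (\<lambda>y. (1 / fact (snd (snd j))) * BPf \<theta> (snd (snd j)) (a (fst j)) (b (fst (snd j))) y) x =
     (1 / fact (snd (snd j))) * pd i (BPf \<theta> (snd (snd j)) (a (fst j)) (b (fst (snd j)))) x"
    by (rule ld_cmult) (rule smooth_ld0[OF U smooth_BPf[OF sa sb] x])
  have "pd i (mstar \<theta> a b k) x = (\<Sum>j\<in>T3 k. (1 / fact (snd (snd j))) * pd i (BPf \<theta> (snd (snd j)) (a (fst j)) (b (fst (snd j)))) x)"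
    unfolding e using ld_sum[OF finite_T3, where u = "\<lambda>j y. (1 / fact (snd (snd j))) * BPf \<theta> (snd (snd j)) (a (fst j)) (b (fst (snd j))) y" and x = x and i = i] l
    by simp
  also have "\<dots> = mstar \<theta> (mpd i a) b k x + mstar \<theta> a (mpd i b) k x"
    by (simp add: mstar_T mpd_def pd_BPf[OF sa sb x] distrib_left sum.distrib)
  finally show ?thesis .
qed


lemma mstar_cong:
  assumes "\<And>k y. y \<in> U \<Longrightarrow> a k y = a' k y" "\<And>k y. y \<in> U \<Longrightarrow> b k y = b' k y" "x \<in> U"
  shows "mstar \<theta> a b k x = mstar \<theta> a' b' k x"
proof -
  have "\<And>ks p. pds ks (a p) x = pds ks (a' p) x" by (rule pds_cong[OF U]) (use assms in auto)
  moreover have "\<And>ks p. pds ks (b p) x = pds ks (b' p) x" by (rule pds_cong[OF U]) (use assms in auto)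
  ultimately show ?thesis by (simp add: mstar_def)
qed

lemma mpd_cong:
  assumes "\<And>k y. y \<in> U \<Longrightarrow> a k y = a' k y" "x \<in> U"
  shows "mpd i a k x = mpd i a' k x"
  unfolding mpd_def by (rule pd_cong[OF U]) (use assms in auto)

end




definition rstU :: "(real^'n::finite) set \<Rightarrow> 'n moyal \<Rightarrow> 'n moyal" where
  "rstU U a = (\<lambda>k x. if x \<in> U then a k x else 0)"
definition smU :: "(real^'n::finite) set \<Rightarrow> 'n moyal \<Rightarrow> bool" where
  "smU U a \<longleftrightarrow> moyal_elem U a \<and> (\<forall>k x. x \<notin> U \<longrightarrow> a k x = 0)"
definition mulU :: "(real^'n::finite) set \<Rightarrow> real^'n^'n \<Rightarrow> 'n moyal \<Rightarrow> 'n moyal \<Rightarrow> 'n moyal" where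
  "mulU U \<theta> a b = rstU U (mstar \<theta> a b)"
definition oneU :: "(real^'n::finite) set \<Rightarrow> 'n moyal" where
  "oneU U = rstU U mone"
definition DU :: "(real^'n::finite) set \<Rightarrow> 'n \<Rightarrow> 'n moyal \<Rightarrow> 'n moyal" where
  "DU U i a = rstU U (mpd i a)"
definition halfm :: "'n::finite moyal \<Rightarrow> 'n moyal" where
  "halfm a = mscale (1/2) a"

lemma fun_add_app: "(a + b) k x = a k x + (b :: 'n::finite moyal) k x" by simp
lemma fun_uminus_app: "(- a) k x = - (a :: 'n::finite moyal) k x" by simp

lemma sum_fun_app: "(sum g I) k x = (\<Sum>i\<in>I. (g i :: 'n::finite moyal) k x)"
proof (cases "finite I")
  case True then show ?thesis by (induction I rule: finite_induct) auto
next
  case False then show ?thesis by simp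
qed

context
  fixes U :: "(real^'n::finite) set"
  assumes U: "open U"
begin

lemma moyal_rst: "moyal_elem U (rstU U a) \<longleftrightarrow> moyal_elem U a"
  unfolding moyal_elem_def rstU_def
  using smooth_cong[OF U] by (metis (mono_tags, lifting))

lemma smU_rst: "moyal_elem U a \<Longrightarrow> smU U (rstU U a)"
  by (simp add: smU_def moyal_rst) (simp add: rstU_def)

lemma smU_eq: "smU U a \<Longrightarrow> rstU U a = a"
  by (auto simp: smU_def rstU_def fun_eq_iff)

lemma mstar_rstL: "x \<in> U \<Longrightarrow> mstar \<theta> (rstU U a) b k x = mstar \<theta> a b k x"
  by (rule mstar_cong[OF U]) (auto simp: rstU_def)
lemma mstar_rstR: "x \<in> U \<Longrightarrow> mstar \<theta> a (rstU U b) k x = mstar \<theta> a b k x"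
  by (rule mstar_cong[OF U]) (auto simp: rstU_def)
lemma mpd_rst: "x \<in> U \<Longrightarrow> mpd i (rstU U a) k x = mpd i a k x"
  by (rule mpd_cong[OF U]) (auto simp: rstU_def)

lemma dalg_inst: "dalg (smU U) (mulU U \<theta>) (oneU U) (DU U) halfm"
proof
  fix a b c :: "'n moyal" and i j :: 'n
  have ea: "\<And>a b :: 'n moyal. a + b = (\<lambda>k y. a k y + b k y)" by (simp add: fun_eq_iff)
  show "smU U a \<Longrightarrow> smU U b \<Longrightarrow> smU U (a + b)"
    by (auto simp: smU_def moyal_elem_def ea intro!: smooth_add[OF U])
  show "smU U a \<Longrightarrow> smU U (- a)"
  proof -
    assume a: "smU U a"
    have "\<And>k. smooth_on U (\<lambda>y. (-1) * a k y)" using a by (intro smooth_cmult[OF U]) (auto simp: smU_def moyal_elem_def)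
    then have "\<And>k. smooth_on U ((- a) k)" by (simp add: fun_Compl_def)
    then show ?thesis using a by (auto simp: smU_def moyal_elem_def)
  qed
  show "smU U 0"
    using smooth_const[OF U, of 0] by (simp add: smU_def moyal_elem_def zero_fun_def)
  show "smU U a \<Longrightarrow> smU U b \<Longrightarrow> smU U (mulU U \<theta> a b)"
    unfolding mulU_def by (rule smU_rst, rule smooth_mstar[OF U]) (auto simp: smU_def)
  show "smU U (oneU U)"
    unfolding oneU_def
    by (rule smU_rst) (simp add: moyal_elem_def mone_def smooth_const[OF U])
  show "smU U a \<Longrightarrow> smU U (DU U i a)"
    unfolding DU_def
    by (rule smU_rst) (auto simp: smU_def moyal_elem_def mpd_def intro!: smooth_pd[OF U])
  show "smU U a \<Longrightarrow> smU U (halfm a)"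
  proof -
    assume a: "smU U a"
    have "\<And>k. smooth_on U (\<lambda>y. (1/2) * a k y)" using a by (intro smooth_cmult[OF U]) (auto simp: smU_def moyal_elem_def)
    then show ?thesis using a by (auto simp: smU_def moyal_elem_def halfm_def mscale_def)
  qed
  show "smU U a \<Longrightarrow> smU U b \<Longrightarrow> smU U c \<Longrightarrow> mulU U \<theta> (a + b) c = mulU U \<theta> a c + mulU U \<theta> b c"
    unfolding mulU_def smU_def
    by (auto simp: fun_eq_iff rstU_def ea mstar_addL[OF U])
  show "smU U a \<Longrightarrow> smU U b \<Longrightarrow> smU U c \<Longrightarrow> mulU U \<theta> a (b + c) = mulU U \<theta> a b + mulU U \<theta> a c"
    unfolding mulU_def smU_def
    by (auto simp: fun_eq_iff rstU_def ea mstar_addR[OF U])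
  show "smU U a \<Longrightarrow> smU U b \<Longrightarrow> smU U c \<Longrightarrow> mulU U \<theta> (mulU U \<theta> a b) c = mulU U \<theta> a (mulU U \<theta> b c)"
  proof -
    assume a: "smU U a" and b: "smU U b" and c: "smU U c"
    show ?thesis unfolding mulU_def
    proof (intro ext)
      fix k x
      show "rstU U (mstar \<theta> (rstU U (mstar \<theta> a b)) c) k x = rstU U (mstar \<theta> a (rstU U (mstar \<theta> b c))) k x"
      proof (cases "x \<in> U")
        case True
        have "mstar \<theta> (rstU U (mstar \<theta> a b)) c k x = mstar \<theta> (mstar \<theta> a b) c k x" by (rule mstar_rstL[OF True])
        also have "\<dots> = mstar \<theta> a (mstar \<theta> b c) k x"
          by (rule mstar_assoc[OF U _ _ _ True]) (use a b c in \<open>auto simp: smU_def\<close>)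
        also have "\<dots> = mstar \<theta> a (rstU U (mstar \<theta> b c)) k x" by (rule mstar_rstR[OF True, symmetric])
        finally show ?thesis using True by (simp add: rstU_def[of U "mstar _ _ _"])
      qed (simp add: rstU_def)
    qed
  qed
  show "smU U a \<Longrightarrow> mulU U \<theta> (oneU U) a = a"
    unfolding mulU_def oneU_def smU_def
    by (auto simp: fun_eq_iff rstU_def[of U "mstar _ _ _"] mstar_rstL mstar_oneL)
  show "smU U a \<Longrightarrow> mulU U \<theta> a (oneU U) = a"
    unfolding mulU_def oneU_def smU_def
    by (auto simp: fun_eq_iff rstU_def[of U "mstar _ _ _"] mstar_rstR mstar_oneR)
  show "smU U a \<Longrightarrow> smU U b \<Longrightarrow> DU U i (a + b) = DU U i a + DU U i b"
  proof -
    assume a: "smU U a" and b: "smU U b"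
    show ?thesis unfolding DU_def
    proof (intro ext)
      fix k x
      show "rstU U (mpd i (a + b)) k x = (rstU U (mpd i a) + rstU U (mpd i b)) k x"
      proof (cases "x \<in> U")
        case True
        have "pd i (\<lambda>y. a k y + b k y) x = pd i (a k) x + pd i (b k) x"
          by (rule ld_add[THEN conjunct2]) (use a b True smooth_ld0[OF U] in \<open>auto simp: smU_def moyal_elem_def\<close>)
        then show ?thesis using True by (simp add: rstU_def mpd_def ea)
      qed (simp add: rstU_def)
    qed
  qed
  show "smU U a \<Longrightarrow> smU U b \<Longrightarrow> DU U i (mulU U \<theta> a b) = mulU U \<theta> (DU U i a) b + mulU U \<theta> a (DU U i b)"
  proof -
    assume a: "smU U a" and b: "smU U b"
    show ?thesis unfolding DU_def mulU_def
    proof (intro ext)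
      fix k x
      show "rstU U (mpd i (rstU U (mstar \<theta> a b))) k x =
         (rstU U (mstar \<theta> (rstU U (mpd i a)) b) + rstU U (mstar \<theta> a (rstU U (mpd i b)))) k x"
      proof (cases "x \<in> U")
        case True
        have "mpd i (rstU U (mstar \<theta> a b)) k x = mpd i (mstar \<theta> a b) k x" by (rule mpd_rst[OF True])
        also have "\<dots> = mstar \<theta> (mpd i a) b k x + mstar \<theta> a (mpd i b) k x"
          unfolding mpd_def[of i "mstar \<theta> a b"]
          by (rule mpd_mstar[OF U _ _ True]) (use a b in \<open>auto simp: smU_def\<close>)
        also have "\<dots> = mstar \<theta> (rstU U (mpd i a)) b k x + mstar \<theta> a (rstU U (mpd i b)) k x"
          by (simp add: mstar_rstL[OF True] mstar_rstR[OF True])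
        finally show ?thesis using True by (simp add: rstU_def[of U "mpd _ _"] rstU_def[of U "mstar _ _ _"])
      qed (simp add: rstU_def)
    qed
  qed
  show "smU U a \<Longrightarrow> DU U i (DU U j a) = DU U j (DU U i a)"
  proof -
    assume a: "smU U a"
    show ?thesis unfolding DU_def
    proof (intro ext)
      fix k x
      show "rstU U (mpd i (rstU U (mpd j a))) k x = rstU U (mpd j (rstU U (mpd i a))) k x"
      proof (cases "x \<in> U")
        case True
        have "pd i (pd j (a k)) x = pd j (pd i (a k)) x"
          by (rule schwarz[OF U]) (use a True in \<open>auto simp: smU_def moyal_elem_def\<close>)
        moreover have "mpd i (rstU U (mpd j a)) k x = mpd i (mpd j a) k x" by (rule mpd_rst[OF True])
        moreover have "mpd j (rstU U (mpd i a)) k x = mpd j (mpd i a) k x" by (rule mpd_rst[OF True])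
        ultimately show ?thesis using True
          by (simp add: rstU_def[of U "mpd _ (rstU U _)"]) (simp add: mpd_def)
      qed (simp add: rstU_def)
    qed
  qed
  show "smU U a \<Longrightarrow> smU U b \<Longrightarrow> halfm (a + b) = halfm a + halfm b"
    by (simp add: halfm_def mscale_def fun_eq_iff algebra_simps)
  show "smU U a \<Longrightarrow> halfm a + halfm a = a"
    by (simp add: halfm_def mscale_def fun_eq_iff)
qed


lemma T_star: "rstU U (mstar \<theta> a b) = mulU U \<theta> (rstU U a) (rstU U b)"
  unfolding mulU_def by (auto simp: fun_eq_iff rstU_def[of U "mstar _ _ _"] mstar_rstL mstar_rstR)
lemma T_pd: "rstU U (mpd i a) = DU U i (rstU U a)"
  unfolding DU_def by (auto simp: fun_eq_iff rstU_def[of U "mpd _ _"] mpd_rst)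

end

lemma T_madd: "rstU U (madd a b) = rstU U a + rstU U b"
  by (auto simp: fun_eq_iff rstU_def madd_def)
lemma T_mneg: "rstU U (mneg a) = - rstU U a"
  by (auto simp: fun_eq_iff rstU_def mneg_def)
lemma T_mdiff: "rstU U (mdiff a b) = rstU U a - rstU U b"
  by (auto simp: fun_eq_iff rstU_def mdiff_def madd_def mneg_def)
lemma T_half: "rstU U (mscale (1/2) a) = halfm (rstU U a)"
  by (auto simp: fun_eq_iff rstU_def halfm_def mscale_def)
lemma T_msum: "rstU U (msum I f) = (\<Sum>i\<in>I. rstU U (f i))"
  by (auto simp: fun_eq_iff rstU_def msum_def sum_fun_app)
lemma T_mone: "rstU U mone = oneU U" by (simp add: oneU_def)
lemma T_mzero: "rstU U mzero = 0" by (auto simp: fun_eq_iff rstU_def mzero_def)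
lemma T_if: "rstU U (if P then a else b) = (if P then rstU U a else rstU U b)" by simp
lemma meq_iff: "meq U a b \<longleftrightarrow> rstU U a = rstU U b"
  by (auto simp: meq_def rstU_def fun_eq_iff)




lemmas Tsimps0 = T_madd T_mneg T_mdiff T_half T_msum T_mone T_mzero T_if

theorem mainTheorem13:
  fixes U :: "(real^'n::finite) set"
    and \<theta> :: "real^'n^'n"
    and X :: "'m::finite \<Rightarrow> 'n moyal"
    and G :: "'n \<Rightarrow> 'n \<Rightarrow> 'n moyal"
  assumes "open U"
    and "\<forall>i j. \<theta> $ i $ j = - \<theta> $ j $ i"
    and "nc_space U \<theta> X G"
  shows
    "(\<forall>l k i j. meq U (Riem \<theta> X G l k i j)
       (madd (madd (mdiff (mneg (mpd j (Gam \<theta> X G l i k)))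
                            (msum UNIV (\<lambda>p. mstar \<theta> (Gam \<theta> X G p i k) (Gam \<theta> X G l j p))))
                    (mpd i (Gam \<theta> X G l j k)))
             (msum UNIV (\<lambda>p. mstar \<theta> (Gam \<theta> X G p j k) (Gam \<theta> X G l i p)))))
    \<and>
    (\<forall>l k i j. meq U (Riemtil \<theta> X G l k i j)
       (madd (madd (mdiff (mneg (mpd j (Gamtil \<theta> X G l i k)))
                            (msum UNIV (\<lambda>p. mstar \<theta> (Gamtil \<theta> X G l j p) (Gamtil \<theta> X G p i k))))
                    (mpd i (Gamtil \<theta> X G l j k)))
             (msum UNIV (\<lambda>p. mstar \<theta> (Gamtil \<theta> X G l i p) (Gamtil \<theta> X G p j k)))))
    \<and>
    (\<forall>k i j \<beta>. meq U
       (mdiff (nabla \<theta> X G i (nabla \<theta> X G j (Evec X k)) \<beta>)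
              (nabla \<theta> X G j (nabla \<theta> X G i (Evec X k)) \<beta>))
       (msum UNIV (\<lambda>l. mstar \<theta> (Riem \<theta> X G l k i j) (Evec X l \<beta>))))
    \<and>
    (\<forall>k i j \<alpha>. meq U
       (mdiff (nablatil \<theta> X G i (nablatil \<theta> X G j (Evec X k)) \<alpha>)
              (nablatil \<theta> X G j (nablatil \<theta> X G i (Evec X k)) \<alpha>))
       (msum UNIV (\<lambda>l. mstar \<theta> (Evec X l \<alpha>) (Riemtil \<theta> X G l k i j))))"
proof -
  note U = assms(1)
  have ncs: "\<forall>\<alpha>. moyal_elem U (X \<alpha>)" "is_metric_inverse U \<theta> X G"
    using assms(3) by (auto simp: nc_space_def)
  interpret D: dalg "smU U" "mulU U \<theta>" "oneU U" "DU U" halfm by (rule dalg_inst[OF U])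
  define X' where "X' \<alpha> = rstU U (X \<alpha>)" for \<alpha>
  define G' where "G' i j = rstU U (G i j)" for i j
  have smX: "\<And>\<alpha>. smU U (X' \<alpha>)" unfolding X'_def using ncs(1) smU_rst[OF U] by blast
  have smG: "D.msm G'" unfolding D.msm_def G'_def
    using ncs(2) smU_rst[OF U] by (auto simp: is_metric_inverse_def)
  have bE0: "\<And>k \<alpha>. rstU U (Evec X k \<alpha>) = DU U k (X' \<alpha>)"
    by (simp add: Evec_def T_pd[OF U] X'_def)
  have bg0: "\<And>i j. rstU U (metric \<theta> X i j) = (\<Sum>\<alpha>\<in>UNIV. mulU U \<theta> (DU U i (X' \<alpha>)) (DU U j (X' \<alpha>)))"
    by (simp add: metric_def T_star[OF U] T_pd[OF U] T_msum X'_def)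
  have inv: "\<And>i j. (\<Sum>l\<in>UNIV. mulU U \<theta> (rstU U (metric \<theta> X i l)) (G' l j)) = (if i = j then oneU U else 0)"
       "\<And>i j. (\<Sum>l\<in>UNIV. mulU U \<theta> (G' i l) (rstU U (metric \<theta> X l j))) = (if i = j then oneU U else 0)"
    using ncs(2) unfolding is_metric_inverse_def meq_iff matmat_def
    by (simp_all add: T_msum T_star[OF U] G'_def T_mone T_mzero)
  interpret E: espace "smU U" "mulU U \<theta>" "oneU U" "DU U" halfm X' G'
  proof
    show "\<And>\<alpha>. smU U (X' \<alpha>)" by (rule smX)
    show "D.msm G'" by (rule smG)
    show "D.mm (D.mm (\<lambda>k \<alpha>. DU U k (X' \<alpha>)) (D.tr (\<lambda>k \<alpha>. DU U k (X' \<alpha>)))) G' = D.idm"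
      using inv(1) by (simp add: D.mm_def D.tr_def D.idm_def bg0 fun_eq_iff)
    show "D.mm G' (D.mm (\<lambda>k \<alpha>. DU U k (X' \<alpha>)) (D.tr (\<lambda>k \<alpha>. DU U k (X' \<alpha>)))) = D.idm"
      using inv(2) by (simp add: D.mm_def D.tr_def D.idm_def bg0 fun_eq_iff)
  qed
  have b1: "\<And>k \<alpha>. rstU U (Evec X k \<alpha>) = E.EE k \<alpha>"
    by (simp add: bE0 E.EE_def)
  have b2: "\<And>i j. rstU U (metric \<theta> X i j) = E.gM i j"
    by (simp add: bg0 E.gM_def D.mm_def D.tr_def E.EE_def)
  have b3: "\<And>i \<alpha>. rstU U (Etil \<theta> X G i \<alpha>) = E.ET \<alpha> i"
    by (simp add: Etil_def T_msum T_star[OF U] b1 G'_def[symmetric] E.ET_def D.mm_def D.tr_def)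
  have b4: "\<And>\<alpha> \<beta>. rstU U (proj \<theta> X G \<alpha> \<beta>) = E.eM \<alpha> \<beta>"
    by (simp add: proj_def T_msum T_star[OF U] b1 b3 E.eM_def D.mm_def)
  have b5: "\<And>i \<alpha> \<beta>. rstU U (dproj \<theta> X G i \<alpha> \<beta>) = E.de i \<alpha> \<beta>"
    by (simp add: dproj_def T_pd[OF U] b4 E.de_def D.MD_def)
  have b6: "\<And>i j \<alpha> \<beta>. rstU U (curv \<theta> X G i j \<alpha> \<beta>) = E.RR i j \<alpha> \<beta>"
    by (simp add: curv_def T_mneg T_mdiff matmat_def T_msum T_star[OF U] b5 E.RR_def D.mm_def)
  have bR: "\<And>l k i j. rstU U (Riem \<theta> X G l k i j) = E.RM i j k l"
    by (simp add: Riem_def rowcol_def rowmat_def T_msum T_star[OF U] b1 b3 b6 E.RM_def D.mm_def)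
  have bRt: "\<And>l k i j. rstU U (Riemtil \<theta> X G l k i j) = E.RTM i j l k"
    by (simp add: Riemtil_def T_mneg T_msum T_star[OF U] G'_def[symmetric] bR[unfolded Riem_def] b2 E.RTM_entry)
  have bG3: "\<And>i j l. rstU U (Gamma3 \<theta> X i j l) = E.AA i j l"
    by (simp add: Gamma3_def cGamma_def Upsilon_def T_madd T_mdiff T_half T_pd[OF U] b2 rowcol_def T_msum T_star[OF U] b1
        E.AA_def[symmetric] E.BB_def[symmetric] E.C1)
  have bG3t: "\<And>i j l. rstU U (Gamma3til \<theta> X i j l) = E.BB i j l"
    by (simp add: Gamma3til_def cGamma_def Upsilon_def T_madd T_mdiff T_half T_pd[OF U] b2 rowcol_def T_msum T_star[OF U] b1
        E.AA_def[symmetric] E.BB_def[symmetric] E.C2)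
  have bGam: "\<And>k i j. rstU U (Gam \<theta> X G k i j) = E.Gm i j k"
    by (simp add: Gam_def T_msum T_star[OF U] bG3 G'_def[symmetric] E.Gm_entry)
  have bGamt: "\<And>k i j. rstU U (Gamtil \<theta> X G k i j) = E.Gt i k j"
    by (simp add: Gamtil_def T_msum T_star[OF U] bG3t G'_def[symmetric] E.Gt_entry)
  have bnab: "\<And>i \<zeta> \<beta>. rstU U (nabla \<theta> X G i \<zeta> \<beta>) = E.NBr i (\<lambda>\<alpha>. rstU U (\<zeta> \<alpha>)) \<beta>"
    by (simp add: nabla_def T_mdiff T_pd[OF U] rowmat_def T_msum T_star[OF U] b5 E.NBr_def)
  have bnabt: "\<And>i \<xi> \<alpha>. rstU U (nablatil \<theta> X G i \<xi> \<alpha>) = E.NTc i (\<lambda>\<beta>. rstU U (\<xi> \<beta>)) \<alpha>"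
    by (simp add: nablatil_def T_mdiff T_pd[OF U] matcol_def T_msum T_star[OF U] b5 E.NTc_def)
  have ee: "\<And>k. (\<lambda>\<alpha>. rstU U (Evec X k \<alpha>)) = E.EE k" by (simp add: b1 fun_eq_iff)
  show ?thesis
  proof (intro conjI allI)
    fix l k i j
    show "meq U (Riem \<theta> X G l k i j)
       (madd (madd (mdiff (mneg (mpd j (Gam \<theta> X G l i k)))
                            (msum UNIV (\<lambda>p. mstar \<theta> (Gam \<theta> X G p i k) (Gam \<theta> X G l j p))))
                    (mpd i (Gam \<theta> X G l j k)))
             (msum UNIV (\<lambda>p. mstar \<theta> (Gam \<theta> X G p j k) (Gam \<theta> X G l i p))))"
      unfolding meq_iff
      by (simp add: T_madd T_mdiff T_mneg T_pd[OF U] T_msum T_star[OF U] bR bGam E.T1_entry)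
  next
    fix l k i j
    show "meq U (Riemtil \<theta> X G l k i j)
       (madd (madd (mdiff (mneg (mpd j (Gamtil \<theta> X G l i k)))
                            (msum UNIV (\<lambda>p. mstar \<theta> (Gamtil \<theta> X G l j p) (Gamtil \<theta> X G p i k))))
                    (mpd i (Gamtil \<theta> X G l j k)))
             (msum UNIV (\<lambda>p. mstar \<theta> (Gamtil \<theta> X G l i p) (Gamtil \<theta> X G p j k))))"
      unfolding meq_iff
      by (simp add: T_madd T_mdiff T_mneg T_pd[OF U] T_msum T_star[OF U] bRt bGamt E.T2_entry)
  next
    fix k i j \<beta>
    have n1: "\<And>j. (\<lambda>\<alpha>. rstU U (nabla \<theta> X G j (Evec X k) \<alpha>)) = E.NBr j (E.EE k)"
      by (simp add: bnab ee fun_eq_iff)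
    show "meq U
       (mdiff (nabla \<theta> X G i (nabla \<theta> X G j (Evec X k)) \<beta>)
              (nabla \<theta> X G j (nabla \<theta> X G i (Evec X k)) \<beta>))
       (msum UNIV (\<lambda>l. mstar \<theta> (Riem \<theta> X G l k i j) (Evec X l \<beta>)))"
      unfolding meq_iff
      by (simp add: T_mdiff bnab n1 T_msum T_star[OF U] bR b1 E.T3_entry)
  next
    fix k i j \<alpha>
    have n1: "\<And>j. (\<lambda>\<beta>. rstU U (nablatil \<theta> X G j (Evec X k) \<beta>)) = E.NTc j (E.EE k)"
      by (simp add: bnabt ee fun_eq_iff)
    show "meq U
       (mdiff (nablatil \<theta> X G i (nablatil \<theta> X G j (Evec X k)) \<alpha>)
              (nablatil \<theta> X G j (nablatil \<theta> X G i (Evec X k)) \<alpha>))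
       (msum UNIV (\<lambda>l. mstar \<theta> (Evec X l \<alpha>) (Riemtil \<theta> X G l k i j)))"
      unfolding meq_iff
      by (simp add: T_mdiff bnabt n1 T_msum T_star[OF U] bRt b1 E.T4_entry)
  qed
qed


end
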